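(* There exist infinitely many real biquadratic fields $K$ such that the fundamental unit of each of the three quadratic subfields of $K$ has norm $-1$ and the unit signature rank of $K$ is $3$.
   Context: For a totally real field $F$ of degree $n$ and $0\neq\alpha\in F$, the signature of $\alpha$ is the vector in $\mathbb{F}_2^n$ whose entry at a real embedding $v$ is $0$ if $v(\alpha)>0$ and $1$ if $v(\alpha)<0$. The signatures of the units of $F$ form a subspace of $\mathbb{F}_2^n$; its dimension is the unit signature rank of $F$. *)

theory Defs
  imports "HOL-Analysis.Analysis" "HOL-Computational_Algebra.Computational_Algebra" "HOL-Library.Z2"
begin

(* Real biquadratic field K = Q(sqrt a, sqrt b) inside R, a b distinct squarefree integers > 1. *)
definition real_biquadratic :: "int \<Rightarrow> int \<Rightarrow> bool" where
  "real_biquadratic a b \<longleftrightarrow> a > 1 \<and> b > 1 \<and> squarefree a \<and> squarefree b \<and> a \<noteq> b"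

(* Image of q0 + q1 sqrt a + q2 sqrt b + q3 sqrt a sqrt b under the real embedding
   sqrt a \<mapsto> (-1)^s sqrt a, sqrt b \<mapsto> (-1)^t sqrt b.  (s,t) = (False,False) is the identity. *)
definition bq_elt :: "int \<Rightarrow> int \<Rightarrow> bool \<Rightarrow> bool \<Rightarrow> rat \<times> rat \<times> rat \<times> rat \<Rightarrow> real" where
  "bq_elt a b s t q = (case q of (q0, q1, q2, q3) \<Rightarrow>
      of_rat q0 + (if s then -1 else 1) * of_rat q1 * sqrt (of_int a)
      + (if t then -1 else 1) * of_rat q2 * sqrt (of_int b)
      + (if s = t then 1 else -1) * of_rat q3 * sqrt (of_int a) * sqrt (of_int b))"

definition biquad_field :: "int \<Rightarrow> int \<Rightarrow> real set" where
  "biquad_field a b = {bq_elt a b False False q | q. True}"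

(* units of the ring of integers of K (given by their rational coordinates) *)
definition bq_units :: "int \<Rightarrow> int \<Rightarrow> (rat \<times> rat \<times> rat \<times> rat) set" where
  "bq_units a b = {q. bq_elt a b False False q \<noteq> 0 \<and> algebraic_int (bq_elt a b False False q)
                      \<and> algebraic_int (1 / bq_elt a b False False q)}"

(* signature vector in F_2^4, indexed by the four real embeddings *)
definition bq_signature :: "int \<Rightarrow> int \<Rightarrow> rat \<times> rat \<times> rat \<times> rat \<Rightarrow> bit ^ (bool \<times> bool)" where
  "bq_signature a b q = (\<chi> i. if bq_elt a b (fst i) (snd i) q < 0 then 1 else 0)"

(* dimension over F_2 of the space of unit signatures *)
definition unit_signature_rank :: "int \<Rightarrow> int \<Rightarrow> nat" where
  "unit_signature_rank a b =
     vector_space.dim ((*s) :: bit \<Rightarrow> bit ^ (bool \<times> bool) \<Rightarrow> bit ^ (bool \<times> bool))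
       (bq_signature a b ` bq_units a b)"

(* real quadratic field Q(sqrt d): element x + y sqrt d *)
definition quad_elt :: "int \<Rightarrow> rat \<times> rat \<Rightarrow> real" where
  "quad_elt d p = of_rat (fst p) + of_rat (snd p) * sqrt (of_int d)"

definition quad_units :: "int \<Rightarrow> (rat \<times> rat) set" where
  "quad_units d = {p. quad_elt d p \<noteq> 0 \<and> algebraic_int (quad_elt d p) \<and> algebraic_int (1 / quad_elt d p)}"

definition quad_norm :: "int \<Rightarrow> rat \<times> rat \<Rightarrow> rat" where
  "quad_norm d p = (fst p)^2 - of_int d * (snd p)^2"

(* fundamental unit: the unit eps > 1 with every unit equal to \<plusminus> eps^k, k \<in> Z *)
definition fundamental_unit :: "int \<Rightarrow> rat \<times> rat \<Rightarrow> bool" where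
  "fundamental_unit d e \<longleftrightarrow> e \<in> quad_units d \<and> quad_elt d e > 1 \<and>
     (\<forall>u \<in> quad_units d. \<exists>k::int. quad_elt d u = quad_elt d e powi k \<or> quad_elt d u = - (quad_elt d e powi k))"

end

theory Submission
  imports Defs "Jordan_Normal_Form.Char_Poly" "HOL-Number_Theory.Cong"
begin


lemma alg_int_from_mat:
  fixes x :: real and M :: "int mat" and v :: "real Matrix.vec"
  assumes M: "M \<in> carrier_mat n n" and v: "v \<in> carrier_vec n" "v \<noteq> 0\<^sub>v n"
     and eq: "map_mat real_of_int M *\<^sub>v v = x \<cdot>\<^sub>v v"
  shows "algebraic_int x"
proof -
  have M': "map_mat real_of_int M \<in> carrier_mat n n" using M by simp
  have "eigenvalue (map_mat real_of_int M) x"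
    unfolding eigenvalue_def eigenvector_def using M v eq by (intro exI[of _ v]) auto
  then have "poly (char_poly (map_mat real_of_int M)) x = 0"
    using eigenvalue_root_char_poly[OF M'] by blast
  moreover have "char_poly (map_mat real_of_int M) = map_poly of_int (char_poly M)"
    by (rule of_int_hom.char_poly_hom[OF M])
  moreover have "lead_coeff (char_poly M) = 1" using degree_monic_char_poly[OF M] by simp
  ultimately show ?thesis by (auto simp: algebraic_int_altdef_ipoly)
qed

definition stab :: "('i \<Rightarrow> real) \<Rightarrow> 'i set \<Rightarrow> real \<Rightarrow> bool" where
  "stab w I x \<longleftrightarrow> (\<exists>M::'i\<Rightarrow>'i\<Rightarrow>int. \<forall>k\<in>I. x * w k = (\<Sum>k'\<in>I. of_int (M k k') * w k'))"

lemma stab_nat_alg_int: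
  fixes N :: nat and w :: "nat \<Rightarrow> real"
  assumes "stab w {..<N} x" "k0 < N" "w k0 \<noteq> 0"
  shows "algebraic_int x"
proof -
  obtain M where M: "\<And>k. k < N \<Longrightarrow> x * w k = (\<Sum>k'<N. of_int (M k k') * w k')"
    using assms(1) unfolding stab_def by auto
  define A where "A = mat N N (\<lambda>(i,j). M i j)"
  define v where "v = Matrix.vec N w"
  have A: "A \<in> carrier_mat N N" unfolding A_def by simp
  have v: "v \<in> carrier_vec N" unfolding v_def by simp
  have v0: "v \<noteq> 0\<^sub>v N"
  proof
    assume "v = 0\<^sub>v N"
    then have "Matrix.vec_index v k0 = 0" using assms(2) by simp
    then show False using assms unfolding v_def by simp
  qed
  have "map_mat real_of_int A *\<^sub>v v = x \<cdot>\<^sub>v v"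
  proof (rule eq_vecI)
    fix i assume i: "i < dim_vec (x \<cdot>\<^sub>v v)"
    then have iN: "i < N" using v by simp
    have "Matrix.vec_index (map_mat real_of_int A *\<^sub>v v) i = (\<Sum>k'<N. of_int (M i k') * w k')"
      using iN A unfolding A_def v_def
      by (auto simp: scalar_prod_def lessThan_atLeast0 intro!: sum.cong)
    also have "\<dots> = x * w i" using M[OF iN] by simp
    finally show "Matrix.vec_index (map_mat real_of_int A *\<^sub>v v) i = Matrix.vec_index (x \<cdot>\<^sub>v v) i"
      using iN unfolding v_def by simp
  qed (use A v in auto)
  then show ?thesis using alg_int_from_mat[OF A v v0] by blast
qed

lemma stab_reindex:
  assumes "bij_betw h J I" "stab w I x"
  shows "stab (w \<circ> h) J x"
proof -
  obtain M where M: "\<And>k. k \<in> I \<Longrightarrow> x * w k = (\<Sum>k'\<in>I. of_int (M k k') * w k')"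
    using assms(2) unfolding stab_def by auto
  show ?thesis unfolding stab_def
  proof (intro exI[of _ "\<lambda>k k'. M (h k) (h k')"] ballI)
    fix k assume k: "k \<in> J"
    have hk: "h k \<in> I" using assms(1) k by (auto simp: bij_betw_def)
    have "x * (w \<circ> h) k = (\<Sum>k'\<in>I. of_int (M (h k) k') * w k')" using M[OF hk] by simp
    also have "\<dots> = (\<Sum>k'\<in>J. of_int (M (h k) (h k')) * (w \<circ> h) k')"
      using sum.reindex_bij_betw[OF assms(1), of "\<lambda>k'. of_int (M (h k) k') * w k'"] by simp
    finally show "x * (w \<circ> h) k = (\<Sum>k'\<in>J. of_int (M (h k) (h k')) * (w \<circ> h) k')" .
  qed
qed

lemma stab_alg_int:
  assumes "finite I" "stab w I x" "k0 \<in> I" "w k0 \<noteq> 0"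
  shows "algebraic_int x"
proof -
  obtain h where h: "bij_betw h {..<card I} I"
    using assms(1) by (metis ex_bij_betw_nat_finite lessThan_atLeast0)
  obtain k1 where k1: "k1 < card I" "h k1 = k0"
    using h assms(3) by (metis bij_betw_iff_bijections lessThan_iff)
  show ?thesis
    by (rule stab_nat_alg_int[OF stab_reindex[OF h assms(2)], of k1]) (use k1 assms in auto)
qed

lemma stab_add:
  assumes "finite I" "stab w I x" "stab w I y"
  shows "stab w I (x + y)"
proof -
  obtain M where M: "\<And>k. k \<in> I \<Longrightarrow> x * w k = (\<Sum>k'\<in>I. of_int (M k k') * w k')"
    using assms(2) unfolding stab_def by auto
  obtain N where N: "\<And>k. k \<in> I \<Longrightarrow> y * w k = (\<Sum>k'\<in>I. of_int (N k k') * w k')"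
    using assms(3) unfolding stab_def by auto
  show ?thesis unfolding stab_def
    by (intro exI[of _ "\<lambda>k k'. M k k' + N k k'"] ballI)
       (simp add: distrib_right M N sum.distrib)
qed

lemma stab_mult:
  assumes "finite I" "stab w I x" "stab w I y"
  shows "stab w I (x * y)"
proof -
  obtain M where M: "\<And>k. k \<in> I \<Longrightarrow> x * w k = (\<Sum>k'\<in>I. of_int (M k k') * w k')"
    using assms(2) unfolding stab_def by auto
  obtain N where N: "\<And>k. k \<in> I \<Longrightarrow> y * w k = (\<Sum>k'\<in>I. of_int (N k k') * w k')"
    using assms(3) unfolding stab_def by auto
  show ?thesis unfolding stab_def
  proof (intro exI[of _ "\<lambda>k k''. (\<Sum>k'\<in>I. N k k' * M k' k'')"] ballI)
    fix k assume k: "k \<in> I"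
    have "x * y * w k = x * (\<Sum>k'\<in>I. of_int (N k k') * w k')" using N[OF k] by (simp add: mult.assoc)
    also have "\<dots> = (\<Sum>k'\<in>I. of_int (N k k') * (x * w k'))" by (simp add: sum_distrib_left mult_ac)
    also have "\<dots> = (\<Sum>k'\<in>I. of_int (N k k') * (\<Sum>k''\<in>I. of_int (M k' k'') * w k''))"
      by (intro sum.cong refl) (simp add: M)
    also have "\<dots> = (\<Sum>k'\<in>I. \<Sum>k''\<in>I. of_int (N k k') * of_int (M k' k'') * w k'')"
      by (simp add: sum_distrib_left mult_ac)
    also have "\<dots> = (\<Sum>k''\<in>I. \<Sum>k'\<in>I. of_int (N k k') * of_int (M k' k'') * w k'')"
      by (rule sum.swap)
    also have "\<dots> = (\<Sum>k''\<in>I. of_int (\<Sum>k'\<in>I. N k k' * M k' k'') * w k'')"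
      by (simp add: sum_distrib_right)
    finally show "x * y * w k = (\<Sum>k''\<in>I. of_int (\<Sum>k'\<in>I. N k k' * M k' k'') * w k'')" .
  qed
qed


lemma monic_root_expand:
  fixes p :: "int poly" and x :: real
  assumes "poly (map_poly of_int p) x = 0" "lead_coeff p = 1"
  shows "x ^ degree p = - (\<Sum>i<degree p. of_int (coeff p i) * x ^ i)"
proof -
  have "0 = (\<Sum>i\<le>degree p. of_int (coeff p i) * x ^ i)"
    using assms(1) by (simp add: poly_altdef degree_map_poly coeff_map_poly)
  also have "\<dots> = (\<Sum>i<degree p. of_int (coeff p i) * x ^ i) + x ^ degree p"
    using assms(2) by (simp add: lessThan_Suc_atMost[symmetric])
  finally show ?thesis by linarith
qed

lemma alg_int_poly_ex:
  fixes x :: real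
  assumes "algebraic_int x"
  obtains p :: "int poly" where "poly (map_poly of_int p) x = 0" "lead_coeff p = 1" "degree p > 0"
proof -
  obtain p :: "int poly" where p: "poly (map_poly of_int p) x = 0" "lead_coeff p = 1"
    using assms by (auto simp: algebraic_int_altdef_ipoly)
  have "degree p > 0"
  proof (rule ccontr)
    assume "\<not> degree p > 0"
    then have "p = [:1:]" using p(2) by (metis degree_0_id gr0I)
    then show False using p(1) by simp
  qed
  then show ?thesis using p that by blast
qed

lemma stab_gen:
  fixes x y :: real
  assumes px: "poly (map_poly of_int p) x = 0" "lead_coeff p = 1" "degree p > 0"
      and qy: "poly (map_poly of_int q) y = 0" "lead_coeff q = 1" "degree q > 0"
  defines "I \<equiv> {..<degree p} \<times> {..<degree q}"
  defines "w \<equiv> (\<lambda>k. x ^ fst k * y ^ snd k)"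
  shows "stab w I x" "stab w I y"
proof -
  let ?n = "degree p" and ?m = "degree q"
  have xn: "x ^ ?n = - (\<Sum>i<?n. of_int (coeff p i) * x ^ i)" by (rule monic_root_expand[OF px(1,2)])
  have ym: "y ^ ?m = - (\<Sum>i<?m. of_int (coeff q i) * y ^ i)" by (rule monic_root_expand[OF qy(1,2)])
  define Mx where "Mx = (\<lambda>(k::nat\<times>nat) (k'::nat\<times>nat). if fst k + 1 < ?n then (if k' = (fst k + 1, snd k) then 1 else 0)
                                   else (if snd k' = snd k then - coeff p (fst k') else (0::int)))"
  define My where "My = (\<lambda>(k::nat\<times>nat) (k'::nat\<times>nat). if snd k + 1 < ?m then (if k' = (fst k, snd k + 1) then 1 else 0)
                                   else (if fst k' = fst k then - coeff q (snd k') else (0::int)))"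
  have "x * w k = (\<Sum>k'\<in>I. of_int (Mx k k') * w k')" if k: "k \<in> I" for k
  proof -
    obtain i j where ij: "k = (i,j)" "i < ?n" "j < ?m" using k unfolding I_def by auto
    show ?thesis
    proof (cases "i + 1 < ?n")
      case True
      have "(\<Sum>k'\<in>I. of_int (Mx k k') * w k') = (\<Sum>k'\<in>I. if k' = (i+1,j) then w k' else 0)"
        by (intro sum.cong refl) (use True in \<open>simp add: Mx_def ij\<close>)
      also have "\<dots> = w (i+1, j)" using True ij unfolding I_def by (simp add: sum.delta)
      finally show ?thesis using ij by (simp add: w_def)
    next
      case False
      then have i: "Suc i = ?n" using ij by auto
      have "(\<Sum>k'\<in>I. of_int (Mx k k') * w k')
          = (\<Sum>k'\<in>I. if snd k' = j then - of_int (coeff p (fst k')) * (x ^ fst k' * y ^ snd k') else 0)"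
        by (intro sum.cong refl) (use False in \<open>simp add: Mx_def ij w_def\<close>)
      also have "\<dots> = (\<Sum>i'<?n. \<Sum>j'<?m. if j' = j then - of_int (coeff p i') * (x ^ i' * y ^ j') else 0)"
        unfolding I_def sum.cartesian_product by (simp add: case_prod_beta)
      also have "\<dots> = (\<Sum>i'<?n. - of_int (coeff p i') * (x ^ i' * y ^ j))"
        using ij by (intro sum.cong refl) (simp add: sum.delta')
      also have "\<dots> = x ^ ?n * y ^ j"
        unfolding xn by (simp add: sum_negf sum_distrib_right mult.assoc)
      also have "\<dots> = x * w k" by (simp add: w_def ij flip: i)
      finally show ?thesis by simp
    qed
  qed
  then show "stab w I x" unfolding stab_def by blast
  have "y * w k = (\<Sum>k'\<in>I. of_int (My k k') * w k')" if k: "k \<in> I" for k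
  proof -
    obtain i j where ij: "k = (i,j)" "i < ?n" "j < ?m" using k unfolding I_def by auto
    show ?thesis
    proof (cases "j + 1 < ?m")
      case True
      have "(\<Sum>k'\<in>I. of_int (My k k') * w k') = (\<Sum>k'\<in>I. if k' = (i,j+1) then w k' else 0)"
        by (intro sum.cong refl) (use True in \<open>simp add: My_def ij\<close>)
      also have "\<dots> = w (i, j+1)" using True ij unfolding I_def by (simp add: sum.delta)
      finally show ?thesis using ij by (simp add: w_def mult_ac)
    next
      case False
      then have j: "Suc j = ?m" using ij by auto
      have "(\<Sum>k'\<in>I. of_int (My k k') * w k')
          = (\<Sum>k'\<in>I. if fst k' = i then - of_int (coeff q (snd k')) * (x ^ fst k' * y ^ snd k') else 0)"
        by (intro sum.cong refl) (use False in \<open>simp add: My_def ij w_def\<close>)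
      also have "\<dots> = (\<Sum>i'<?n. \<Sum>j'<?m. if i' = i then - of_int (coeff q j') * (x ^ i' * y ^ j') else 0)"
        unfolding I_def sum.cartesian_product by (simp add: case_prod_beta)
      also have "\<dots> = (\<Sum>j'<?m. - of_int (coeff q j') * (x ^ i * y ^ j'))"
        using ij by (subst sum.swap) (simp add: sum.delta')
      also have "\<dots> = x ^ i * y ^ ?m"
        unfolding ym by (simp add: sum_negf sum_distrib_left mult_ac)
      also have "\<dots> = y * w k" by (simp add: w_def ij mult_ac flip: j)
      finally show ?thesis by simp
    qed
  qed
  then show "stab w I y" unfolding stab_def by blast
qed

lemma alg_int_add_mult:
  fixes x y :: real
  assumes "algebraic_int x" "algebraic_int y"
  shows "algebraic_int (x + y)" "algebraic_int (x * y)"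
proof -
  obtain p where p: "poly (map_poly of_int p) x = 0" "lead_coeff p = 1" "degree p > 0"
    using alg_int_poly_ex[OF assms(1)] by blast
  obtain q where q: "poly (map_poly of_int q) y = 0" "lead_coeff q = 1" "degree q > 0"
    using alg_int_poly_ex[OF assms(2)] by blast
  define I where "I = {..<degree p} \<times> {..<degree q}"
  define w where "w = (\<lambda>k. x ^ fst k * y ^ snd k)"
  have sx: "stab w I x" and sy: "stab w I y" using stab_gen[OF p q] unfolding I_def w_def by auto
  have fin: "finite I" unfolding I_def by simp
  have k0: "(0,0) \<in> I" "w (0,0) \<noteq> 0" using p(3) q(3) unfolding I_def w_def by auto
  show "algebraic_int (x + y)" by (rule stab_alg_int[OF fin stab_add[OF fin sx sy] k0])
  show "algebraic_int (x * y)" by (rule stab_alg_int[OF fin stab_mult[OF fin sx sy] k0])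
qed



lemma sqfree_eq_int:
  fixes a b x y :: int
  assumes "squarefree a" "squarefree b" "coprime x y" "a * x^2 = b * y^2"
  shows "a = b \<or> a = -b"
proof -
  have "y^2 dvd a * x^2" using assms(4) by simp
  moreover have "coprime (y^2) (x^2)" using assms(3) by (simp add: coprime_commute)
  ultimately have "y^2 dvd a" by (simp add: coprime_dvd_mult_left_iff)
  then have y: "y dvd 1" using assms(1) squarefreeD by blast
  have "x^2 dvd b * y^2" using assms(4) by (metis dvd_triv_right)
  moreover have "coprime (x^2) (y^2)" using assms(3) by simp
  ultimately have "x^2 dvd b" by (simp add: coprime_dvd_mult_left_iff)
  then have x: "x dvd 1" using assms(2) squarefreeD by blast
  have "\<bar>x\<bar> = 1" "\<bar>y\<bar> = 1" using x y by simp_all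
  then have "x^2 = 1" "y^2 = 1" by (metis power2_abs one_power2)+
  then show ?thesis using assms(4) by simp
qed

lemma sqfree_eq_rat:
  fixes a b :: int and r :: rat
  assumes "squarefree a" "squarefree b" "a > 0" "b > 0" "of_int a * r^2 = of_int b"
  shows "a = b"
proof -
  obtain n d where nd: "quotient_of r = (n, d)" by (cases "quotient_of r")
  have d: "d > 0" and cop: "coprime n d" and r: "r = of_int n / of_int d"
    using nd quotient_of_denom_pos quotient_of_coprime quotient_of_div by blast+
  have "of_int a * (of_int n)^2 = (of_int b * (of_int d)^2 :: rat)"
    using assms(5) d unfolding r by (simp add: field_simps power2_eq_square)
  then have "a * n^2 = b * d^2" by (metis of_int_eq_iff of_int_mult of_int_power)
  from sqfree_eq_int[OF assms(1,2) cop this] show ?thesis using assms(3,4) by auto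
qed

lemma sqfree_not_square_rat:
  fixes n :: int and r :: rat
  assumes "squarefree n" "n > 1"
  shows "r^2 \<noteq> of_int n"
proof
  assume "r^2 = of_int n"
  then have "of_int 1 * r^2 = of_int n" by simp
  from sqfree_eq_rat[OF _ assms(1) _ _ this] assms show False by simp
qed

lemma sqrt_not_rat:
  fixes n :: int and r :: rat
  assumes "squarefree n" "n > 1"
  shows "sqrt (of_int n) \<noteq> of_rat r"
proof
  assume h: "sqrt (of_int n) = of_rat r"
  have "(of_rat r :: real)^2 = (sqrt (of_int n))^2" by (simp add: h)
  also have "\<dots> = of_int n" using assms(2) by simp
  finally have "(of_rat r :: real)^2 = of_int n" .
  then have "of_rat (r^2) = (of_rat (of_int n) :: real)" by (simp add: of_rat_power)
  then have "r^2 = of_int n" using of_rat_eq_iff by blast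
  then show False using sqfree_not_square_rat[OF assms] by blast
qed

lemma lin_sqrt_zero:
  fixes n :: int and x y :: rat
  assumes "squarefree n" "n > 1" "of_rat x + of_rat y * sqrt (of_int n) = 0"
  shows "x = 0 \<and> y = 0"
proof (cases "y = 0")
  case True then show ?thesis using assms(3) by simp
next
  case False
  then have y: "(of_rat y :: real) \<noteq> 0" by simp
  have "sqrt (of_int n) = - of_rat x / of_rat y" using assms(3) y
    by (simp add: field_simps)
  then have "sqrt (of_int n) = of_rat (- x / y)" by (simp add: of_rat_divide of_rat_minus)
  then show ?thesis using sqrt_not_rat[OF assms(1,2)] by blast
qed

lemma sqrt_sq: "a \<ge> 0 \<Longrightarrow> sqrt (of_int a :: real) * sqrt (of_int a) = of_int a"
  by simp

definition sg :: "bool \<Rightarrow> rat \<Rightarrow> rat" where "sg s x = (if s then -x else x)"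

definition bmul :: "int \<Rightarrow> int \<Rightarrow> rat\<times>rat\<times>rat\<times>rat \<Rightarrow> rat\<times>rat\<times>rat\<times>rat \<Rightarrow> rat\<times>rat\<times>rat\<times>rat" where
  "bmul a b q r = (case q of (q0,q1,q2,q3) \<Rightarrow> case r of (r0,r1,r2,r3) \<Rightarrow>
     (q0*r0 + of_int a*q1*r1 + of_int b*q2*r2 + of_int a * of_int b*q3*r3,
      q0*r1 + q1*r0 + of_int b*(q2*r3 + q3*r2),
      q0*r2 + q2*r0 + of_int a*(q1*r3 + q3*r1),
      q0*r3 + q3*r0 + q1*r2 + q2*r1))"

definition flip :: "bool \<Rightarrow> bool \<Rightarrow> rat\<times>rat\<times>rat\<times>rat \<Rightarrow> rat\<times>rat\<times>rat\<times>rat" where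
  "flip s t q = (case q of (q0,q1,q2,q3) \<Rightarrow> (q0, sg s q1, sg t q2, sg (s \<noteq> t) q3))"

lemma bq_elt_expand:
  "bq_elt a b s t (q0,q1,q2,q3) =
     of_rat q0 + of_rat (sg s q1) * sqrt (of_int a) + of_rat (sg t q2) * sqrt (of_int b)
     + of_rat (sg (s \<noteq> t) q3) * sqrt (of_int a) * sqrt (of_int b)"
  by (auto simp: bq_elt_def sg_def of_rat_minus)

lemma bq_flip: "bq_elt a b s t q = bq_elt a b False False (flip s t q)"
  by (cases q) (auto simp: bq_elt_expand flip_def sg_def)

lemma flip_flip: "flip s t (flip s' t' q) = flip (s \<noteq> s') (t \<noteq> t') q"
  by (cases q) (auto simp: flip_def sg_def)

lemma flip_FF [simp]: "flip False False q = q"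
  by (cases q) (auto simp: flip_def sg_def)

lemma flip_bmul: "flip s t (bmul a b q r) = bmul a b (flip s t q) (flip s t r)"
  by (cases q; cases r; cases s; cases t) (simp_all add: flip_def bmul_def sg_def algebra_simps)

lemma bq_mult_FF:
  assumes "a \<ge> 0" "b \<ge> 0"
  shows "bq_elt a b False False (bmul a b q r) = bq_elt a b False False q * bq_elt a b False False r"
proof -
  obtain q0 q1 q2 q3 where q: "q = (q0,q1,q2,q3)" by (cases q) auto
  obtain r0 r1 r2 r3 where r: "r = (r0,r1,r2,r3)" by (cases r) auto
  define A where "A = sqrt (of_int a :: real)"
  define B where "B = sqrt (of_int b :: real)"
  have ea: "(of_int a :: real) = A * A" unfolding A_def using assms by simp
  have eb: "(of_int b :: real) = B * B" unfolding B_def using assms by simp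
  have "bq_elt a b False False (bmul a b q r) =
     (of_rat q0 * of_rat r0 + of_int a * of_rat q1 * of_rat r1 + of_int b * of_rat q2 * of_rat r2 + of_int a * of_int b * of_rat q3 * of_rat r3)
     + (of_rat q0 * of_rat r1 + of_rat q1 * of_rat r0 + of_int b * (of_rat q2 * of_rat r3 + of_rat q3 * of_rat r2)) * A
     + (of_rat q0 * of_rat r2 + of_rat q2 * of_rat r0 + of_int a * (of_rat q1 * of_rat r3 + of_rat q3 * of_rat r1)) * B
     + (of_rat q0 * of_rat r3 + of_rat q3 * of_rat r0 + of_rat q1 * of_rat r2 + of_rat q2 * of_rat r1) * A * B"
    unfolding q r bmul_def by (simp add: bq_elt_expand sg_def of_rat_add of_rat_mult A_def B_def)
  also have "\<dots> = (of_rat q0 + of_rat q1 * A + of_rat q2 * B + of_rat q3 * A * B) *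
                   (of_rat r0 + of_rat r1 * A + of_rat r2 * B + of_rat r3 * A * B)"
    unfolding ea eb by (simp add: algebra_simps)
  also have "\<dots> = bq_elt a b False False q * bq_elt a b False False r"
    unfolding q r by (simp add: bq_elt_expand sg_def A_def B_def)
  finally show ?thesis .
qed

lemma bq_mult:
  assumes "a \<ge> 0" "b \<ge> 0"
  shows "bq_elt a b s t (bmul a b q r) = bq_elt a b s t q * bq_elt a b s t r"
  by (metis bq_flip flip_bmul bq_mult_FF[OF assms])


lemma bq_inj0:
  assumes ab: "real_biquadratic a b" and h: "bq_elt a b False False q = 0"
  shows "q = (0,0,0,0)"
proof -
  obtain q0 q1 q2 q3 where q: "q = (q0,q1,q2,q3)" by (cases q) auto
  have a: "a > 1" "squarefree a" and b: "b > 1" "squarefree b" and "a \<noteq> b"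
    using ab unfolding real_biquadratic_def by auto
  define A where "A = sqrt (of_int a :: real)"
  define B where "B = sqrt (of_int b :: real)"
  have ea: "A * A = of_int a" unfolding A_def using a by simp
  have eb: "B * B = of_int b" unfolding B_def using b by simp
  define c where "c = q0 * q2 - of_int a * q1 * q3"
  define d where "d = q1 * q2 - q0 * q3"
  define n where "n = q2^2 - of_int a * q3^2"
  have h1: "(of_rat q0 + of_rat q1 * A) + (of_rat q2 + of_rat q3 * A) * B = 0"
    using h unfolding q by (simp add: bq_elt_expand sg_def A_def B_def algebra_simps)
  have "(of_rat c + of_rat d * A) + of_rat n * B =
        ((of_rat q0 + of_rat q1 * A) + (of_rat q2 + of_rat q3 * A) * B) * (of_rat q2 - of_rat q3 * A)"
    unfolding c_def d_def n_def
    by (simp add: of_rat_add of_rat_mult of_rat_diff of_rat_power algebra_simps power2_eq_square flip: ea)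
  then have h2: "of_rat c + of_rat d * A = - (of_rat n * B)" using h1 by simp
  then have "(of_rat c + of_rat d * A)^2 = (of_rat n)^2 * (B * B)" by (simp add: power2_eq_square algebra_simps)
  then have "of_rat (c^2 + of_int a * d^2 - of_int b * n^2) + of_rat (2 * c * d) * A = 0"
    unfolding eb by (simp add: of_rat_add of_rat_mult of_rat_diff of_rat_power algebra_simps power2_eq_square flip: ea)
  from lin_sqrt_zero[OF a(2) a(1) this[unfolded A_def]]
  have e1: "c^2 + of_int a * d^2 = of_int b * n^2" and e2: "c * d = 0" by auto
  have n0: "n = 0"
  proof (rule ccontr)
    assume nn: "n \<noteq> 0"
    show False
    proof (cases "c = 0")
      case True
      then have "of_int a * (d / n)^2 = of_int b" using e1 nn by (simp add: field_simps)
      from sqfree_eq_rat[OF a(2) b(2) _ _ this] a b \<open>a \<noteq> b\<close> show False by simp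
    next
      case False
      then have "d = 0" using e2 by simp
      then have "(c / n)^2 = of_int b" using e1 nn by (simp add: field_simps)
      then show False using sqfree_not_square_rat[OF b(2) b(1)] by blast
    qed
  qed
  have q3: "q3 = 0"
  proof (rule ccontr)
    assume "q3 \<noteq> 0"
    then have "(q2 / q3)^2 = of_int a" using n0 unfolding n_def by (simp add: field_simps)
    then show False using sqfree_not_square_rat[OF a(2) a(1)] by blast
  qed
  have q2: "q2 = 0" using n0 q3 unfolding n_def by simp
  have "of_rat q0 + of_rat q1 * sqrt (of_int a) = 0" using h1 q2 q3 unfolding A_def by simp
  from lin_sqrt_zero[OF a(2) a(1) this] q2 q3 show ?thesis unfolding q by simp
qed

lemma bq_inj:
  assumes ab: "real_biquadratic a b" and h: "bq_elt a b s t q = 0"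
  shows "q = (0,0,0,0)"
proof -
  have "flip s t q = (0,0,0,0)" using bq_inj0[OF ab] h bq_flip by metis
  then have "flip s t (flip s t q) = (0,0,0,0)" by (simp add: flip_def sg_def)
  then show ?thesis by (simp add: flip_flip)
qed


definition badd :: "rat\<times>rat\<times>rat\<times>rat \<Rightarrow> rat\<times>rat\<times>rat\<times>rat \<Rightarrow> rat\<times>rat\<times>rat\<times>rat" where
  "badd q r = (case q of (q0,q1,q2,q3) \<Rightarrow> case r of (r0,r1,r2,r3) \<Rightarrow> (q0+r0, q1+r1, q2+r2, q3+r3))"

definition bscale :: "rat \<Rightarrow> rat\<times>rat\<times>rat\<times>rat \<Rightarrow> rat\<times>rat\<times>rat\<times>rat" where
  "bscale c q = (case q of (q0,q1,q2,q3) \<Rightarrow> (c*q0, c*q1, c*q2, c*q3))"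

lemma bq_add: "bq_elt a b s t (badd q r) = bq_elt a b s t q + bq_elt a b s t r"
  by (cases q; cases r) (simp add: badd_def bq_elt_expand sg_def of_rat_add of_rat_minus of_rat_diff algebra_simps)

lemma bq_scale: "bq_elt a b s t (bscale c q) = of_rat c * bq_elt a b s t q"
  by (cases q) (simp add: bscale_def bq_elt_expand sg_def of_rat_mult of_rat_minus algebra_simps)

lemma bq_const: "bq_elt a b s t (c,0,0,0) = of_rat c"
  by (simp add: bq_elt_expand sg_def)

lemma bq_inj_eq:
  assumes ab: "real_biquadratic a b" and h: "bq_elt a b s t q = bq_elt a b s t r"
  shows "q = r"
proof -
  have "bq_elt a b s t (badd q (bscale (-1) r)) = 0" using h by (simp add: bq_add bq_scale of_rat_minus)
  from bq_inj[OF ab this] show ?thesis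
    by (cases q; cases r) (simp add: badd_def bscale_def)
qed

definition inK :: "int \<Rightarrow> int \<Rightarrow> (bool \<Rightarrow> bool \<Rightarrow> real) \<Rightarrow> bool" where
  "inK a b f \<longleftrightarrow> (\<exists>q. \<forall>s t. f s t = bq_elt a b s t q)"

lemma inK_const: "inK a b (\<lambda>s t. of_rat c)"
  unfolding inK_def by (intro exI[of _ "(c,0,0,0)"]) (simp add: bq_const)

lemma inK_elt: "inK a b (\<lambda>s t. bq_elt a b s t q)"
  unfolding inK_def by blast

lemma inK_add: "inK a b f \<Longrightarrow> inK a b g \<Longrightarrow> inK a b (\<lambda>s t. f s t + g s t)"
  unfolding inK_def
proof -
  assume "\<exists>q. \<forall>s t. f s t = bq_elt a b s t q" "\<exists>q. \<forall>s t. g s t = bq_elt a b s t q"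
  then obtain q r where "\<forall>s t. f s t = bq_elt a b s t q" "\<forall>s t. g s t = bq_elt a b s t r" by blast
  then show "\<exists>q. \<forall>s t. f s t + g s t = bq_elt a b s t q" by (intro exI[of _ "badd q r"]) (simp add: bq_add)
qed

lemma inK_mult: "a \<ge> 0 \<Longrightarrow> b \<ge> 0 \<Longrightarrow> inK a b f \<Longrightarrow> inK a b g \<Longrightarrow> inK a b (\<lambda>s t. f s t * g s t)"
  unfolding inK_def
proof -
  assume ab: "a \<ge> 0" "b \<ge> 0" and "\<exists>q. \<forall>s t. f s t = bq_elt a b s t q" "\<exists>q. \<forall>s t. g s t = bq_elt a b s t q"
  then obtain q r where "\<forall>s t. f s t = bq_elt a b s t q" "\<forall>s t. g s t = bq_elt a b s t r" by blast
  then show "\<exists>q. \<forall>s t. f s t * g s t = bq_elt a b s t q" by (intro exI[of _ "bmul a b q r"]) (simp add: bq_mult[OF ab])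
qed

lemma inK_sum: "finite S \<Longrightarrow> (\<And>i. i \<in> S \<Longrightarrow> inK a b (g i)) \<Longrightarrow> inK a b (\<lambda>s t. \<Sum>i\<in>S. g i s t)"
proof (induction S rule: finite_induct)
  case empty
  then show ?case using inK_const[of a b 0] by simp
next
  case (insert x F)
  then show ?case using inK_add[of a b "g x" "\<lambda>s t. \<Sum>i\<in>F. g i s t"] by simp
qed

lemma inK_power: "a \<ge> 0 \<Longrightarrow> b \<ge> 0 \<Longrightarrow> inK a b f \<Longrightarrow> inK a b (\<lambda>s t. f s t ^ n)"
proof (induction n)
  case 0
  then show ?case using inK_const[of a b 1] by simp
next
  case (Suc n)
  then show ?case using inK_mult[of a b f "\<lambda>s t. f s t ^ n"] by simp
qed

lemma inK_poly:
  fixes p :: "int poly"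
  assumes "a \<ge> 0" "b \<ge> 0"
  shows "inK a b (\<lambda>s t. poly (map_poly of_int p) (bq_elt a b s t q))"
proof -
  have "inK a b (\<lambda>s t. \<Sum>i\<le>degree p. of_int (coeff p i) * bq_elt a b s t q ^ i)"
  proof (rule inK_sum)
    fix i
    have "inK a b (\<lambda>s t. of_rat (of_int (coeff p i)))" by (rule inK_const)
    then have c: "inK a b (\<lambda>s t. of_int (coeff p i))" by simp
    show "inK a b (\<lambda>s t. of_int (coeff p i) * bq_elt a b s t q ^ i)"
      by (rule inK_mult[OF assms c inK_power[OF assms inK_elt]])
  qed simp
  then show ?thesis by (simp add: poly_altdef degree_map_poly coeff_map_poly)
qed

lemma conj_alg_int0:
  assumes ab: "real_biquadratic a b" and h: "algebraic_int (bq_elt a b False False q)"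
  shows "algebraic_int (bq_elt a b s t q)"
proof -
  have a0: "a \<ge> 0" "b \<ge> 0" using ab unfolding real_biquadratic_def by auto
  obtain p :: "int poly" where p: "poly (map_poly of_int p) (bq_elt a b False False q) = 0" "lead_coeff p = 1"
    using h by (auto simp: algebraic_int_altdef_ipoly)
  obtain Q where Q: "\<And>s t. poly (map_poly of_int p) (bq_elt a b s t q) = bq_elt a b s t Q"
    using inK_poly[OF a0, of p q] unfolding inK_def by blast
  have "bq_elt a b False False Q = 0" using p(1) Q[of False False] by simp
  then have "Q = (0,0,0,0)" using bq_inj[OF ab] by blast
  then have "poly (map_poly of_int p) (bq_elt a b s t q) = 0" using Q by (simp add: bq_const)
  then show ?thesis using p(2) by (auto simp: algebraic_int_altdef_ipoly)
qed

lemma bq_flip_gen: "bq_elt a b s t (flip s' t' q) = bq_elt a b (s \<noteq> s') (t \<noteq> t') q"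
proof -
  have "bq_elt a b s t (flip s' t' q) = bq_elt a b False False (flip s t (flip s' t' q))" by (rule bq_flip)
  also have "\<dots> = bq_elt a b False False (flip (s \<noteq> s') (t \<noteq> t') q)" by (simp add: flip_flip)
  also have "\<dots> = bq_elt a b (s \<noteq> s') (t \<noteq> t') q" by (rule bq_flip[symmetric])
  finally show ?thesis .
qed

lemma conj_alg_int:
  assumes ab: "real_biquadratic a b" and h: "algebraic_int (bq_elt a b s0 t0 q)"
  shows "algebraic_int (bq_elt a b s t q)"
proof -
  have "algebraic_int (bq_elt a b False False (flip s0 t0 q))" using h bq_flip by metis
  then have "algebraic_int (bq_elt a b (s \<noteq> s0) (t \<noteq> t0) (flip s0 t0 q))" by (rule conj_alg_int0[OF ab])
  then show ?thesis unfolding bq_flip_gen by (cases s; cases s0; cases t; cases t0) simp_all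
qed


definition cp :: "int \<Rightarrow> int \<Rightarrow> rat\<times>rat\<times>rat\<times>rat \<Rightarrow> rat\<times>rat\<times>rat\<times>rat" where
  "cp a b q = bmul a b (flip False True q) (bmul a b (flip True False q) (flip True True q))"

definition prod4 :: "int \<Rightarrow> int \<Rightarrow> rat\<times>rat\<times>rat\<times>rat \<Rightarrow> real" where
  "prod4 a b q = bq_elt a b False False q * bq_elt a b False True q * bq_elt a b True False q * bq_elt a b True True q"

lemma bq_cp:
  assumes "a \<ge> 0" "b \<ge> 0"
  shows "bq_elt a b s t (bmul a b q (cp a b q)) = prod4 a b q"
  unfolding cp_def prod4_def bq_mult[OF assms] bq_flip_gen
  by (cases s; cases t) (simp_all add: mult_ac)

lemma prod4_rat:
  assumes ab: "real_biquadratic a b"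
  shows "\<exists>N. prod4 a b q = of_rat N"
proof -
  have a0: "a \<ge> 0" "b \<ge> 0" using ab unfolding real_biquadratic_def by auto
  obtain R0 R1 R2 R3 where R: "bmul a b q (cp a b q) = (R0,R1,R2,R3)" by (metis prod_cases4)
  have e: "bq_elt a b s t (R0,R1,R2,R3) = prod4 a b q" for s t using bq_cp[OF a0, of s t q] R by simp
  have "bq_elt a b False False (R0,R1,R2,R3) = bq_elt a b False False (flip True False (R0,R1,R2,R3))"
    using e[of False False] e[of True False] bq_flip[of a b True False] by simp
  then have "(R0,R1,R2,R3) = flip True False (R0,R1,R2,R3)" by (rule bq_inj_eq[OF ab])
  moreover have "bq_elt a b False False (R0,R1,R2,R3) = bq_elt a b False False (flip False True (R0,R1,R2,R3))"
    using e[of False False] e[of False True] bq_flip[of a b False True] by simp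
  then have "(R0,R1,R2,R3) = flip False True (R0,R1,R2,R3)" by (rule bq_inj_eq[OF ab])
  ultimately have "R1 = 0" "R2 = 0" "R3 = 0" by (auto simp: flip_def sg_def)
  then have "prod4 a b q = of_rat R0" using e[of False False] by (simp add: bq_const)
  then show ?thesis by blast
qed

lemma bq_nonzero:
  assumes ab: "real_biquadratic a b" and "bq_elt a b s0 t0 q \<noteq> 0"
  shows "bq_elt a b s t q \<noteq> 0"
proof
  assume "bq_elt a b s t q = 0"
  then have "q = (0,0,0,0)" by (rule bq_inj[OF ab])
  then show False using assms(2) by (simp add: bq_const)
qed

lemma bq_inverse:
  assumes ab: "real_biquadratic a b" and nz: "bq_elt a b False False q \<noteq> 0"
  shows "\<exists>r. \<forall>s t. bq_elt a b s t r = 1 / bq_elt a b s t q"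
proof -
  have a0: "a \<ge> 0" "b \<ge> 0" using ab unfolding real_biquadratic_def by auto
  obtain N where N: "prod4 a b q = of_rat N" using prod4_rat[OF ab] by blast
  have nz': "bq_elt a b s t q \<noteq> 0" for s t using bq_nonzero[OF ab nz] .
  have "prod4 a b q \<noteq> 0" unfolding prod4_def using nz' by simp
  then have N0: "N \<noteq> 0" using N by simp
  show ?thesis
  proof (intro exI allI)
    fix s t
    have "bq_elt a b s t q * bq_elt a b s t (bscale (1/N) (cp a b q)) = of_rat (1/N) * prod4 a b q"
      using bq_cp[OF a0, of s t q] by (simp add: bq_scale bq_mult[OF a0] mult_ac)
    also have "\<dots> = 1" using N N0 by (simp add: of_rat_divide)
    finally show "bq_elt a b s t (bscale (1/N) (cp a b q)) = 1 / bq_elt a b s t q"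
      using nz'[of s t] by (simp add: field_simps)
  qed
qed

lemma of_rat_int_iff: "(of_rat x :: real) \<in> \<int> \<Longrightarrow> x \<in> \<int>"
  by (metis Ints_cases Ints_of_int of_rat_eq_iff of_rat_of_int_eq)

lemma trace_int:
  assumes ab: "real_biquadratic a b" and h: "algebraic_int (bq_elt a b False False q)"
  shows "4 * fst q \<in> \<int>"
proof -
  obtain q0 q1 q2 q3 where q: "q = (q0,q1,q2,q3)" by (cases q) auto
  have ai: "algebraic_int (bq_elt a b s t q)" for s t by (rule conj_alg_int[OF ab h])
  have "algebraic_int (bq_elt a b False False q + bq_elt a b False True q + bq_elt a b True False q + bq_elt a b True True q)"
    using ai[of False False] ai[of False True] ai[of True False] ai[of True True] alg_int_add_mult(1) by blast
  moreover have "bq_elt a b False False q + bq_elt a b False True q + bq_elt a b True False q + bq_elt a b True True q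
      = of_rat (4 * q0)"
    unfolding q by (simp add: bq_elt_expand sg_def of_rat_mult of_rat_minus)
  ultimately have "algebraic_int (of_rat (4 * q0) :: real)" by simp
  then have "(of_rat (4*q0) :: real) \<in> \<int>" by (intro rational_algebraic_int_is_int) auto
  then show ?thesis using of_rat_int_iff q by simp
qed



definition qmul :: "int \<Rightarrow> rat\<times>rat \<Rightarrow> rat\<times>rat \<Rightarrow> rat\<times>rat" where
  "qmul d p r = (fst p * fst r + of_int d * snd p * snd r, fst p * snd r + snd p * fst r)"

definition qcnj :: "rat\<times>rat \<Rightarrow> rat\<times>rat" where "qcnj p = (fst p, - snd p)"

definition qinv :: "int \<Rightarrow> rat\<times>rat \<Rightarrow> rat\<times>rat" where
  "qinv d p = (fst p / quad_norm d p, - snd p / quad_norm d p)"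

definition qneg :: "rat\<times>rat \<Rightarrow> rat\<times>rat" where "qneg p = (- fst p, - snd p)"

lemma quad_mult: "d \<ge> 0 \<Longrightarrow> quad_elt d (qmul d p r) = quad_elt d p * quad_elt d r"
  unfolding quad_elt_def qmul_def
  by (simp add: of_rat_add of_rat_mult algebra_simps flip: of_int_of_nat_eq)

lemma quad_neg: "quad_elt d (qneg p) = - quad_elt d p"
  by (simp add: quad_elt_def qneg_def of_rat_minus)

lemma quad_norm_real: "d \<ge> 0 \<Longrightarrow> of_rat (quad_norm d p) = quad_elt d p * quad_elt d (qcnj p)"
  unfolding quad_elt_def quad_norm_def qcnj_def
  by (simp add: of_rat_diff of_rat_mult of_rat_power of_rat_minus algebra_simps power2_eq_square)

lemma quad_norm_mult: "quad_norm d (qmul d p r) = quad_norm d p * quad_norm d r"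
  unfolding quad_norm_def qmul_def by (simp add: algebra_simps power2_eq_square)

lemma quad_norm_neg: "quad_norm d (qneg p) = quad_norm d p"
  unfolding quad_norm_def qneg_def by simp

lemma quad_norm_inv:
  assumes N: "quad_norm d p \<noteq> 0"
  shows "quad_norm d (qinv d p) = 1 / quad_norm d p"
proof -
  define N where "N = quad_norm d p"
  have "quad_norm d (qinv d p) = (fst p ^ 2 - of_int d * snd p ^ 2) / N^2"
    unfolding qinv_def quad_norm_def N_def by (simp add: power_divide diff_divide_distrib)
  also have "\<dots> = N / N^2" unfolding N_def quad_norm_def by simp
  also have "\<dots> = 1 / N" using N unfolding N_def by (simp add: power2_eq_square)
  finally show ?thesis unfolding N_def .
qed

lemma quad_inj:
  assumes "squarefree d" "d > 1" "quad_elt d p = quad_elt d r"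
  shows "p = r"
proof -
  have "of_rat (fst p - fst r) + of_rat (snd p - snd r) * sqrt (of_int d) = 0"
    using assms(3) by (simp add: quad_elt_def of_rat_diff algebra_simps)
  from lin_sqrt_zero[OF assms(1,2) this] show ?thesis by (simp add: prod_eq_iff)
qed

lemma quad_nonzero_norm:
  assumes "squarefree d" "d > 1" "quad_elt d p \<noteq> 0"
  shows "quad_norm d p \<noteq> 0"
proof
  assume "quad_norm d p = 0"
  then have "quad_elt d p * quad_elt d (qcnj p) = 0" using quad_norm_real[of d p] assms(2) by simp
  then have "quad_elt d (qcnj p) = quad_elt d (0,0)" using assms(3) by (simp add: quad_elt_def)
  then have "qcnj p = (0,0)" by (rule quad_inj[OF assms(1,2)])
  then show False using assms(3) by (simp add: qcnj_def quad_elt_def prod_eq_iff)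
qed

lemma quad_inv:
  assumes "squarefree d" "d > 1" "quad_elt d p \<noteq> 0"
  shows "quad_elt d (qinv d p) = 1 / quad_elt d p"
proof -
  have N: "quad_norm d p \<noteq> 0" by (rule quad_nonzero_norm[OF assms])
  have "quad_elt d (qinv d p) = quad_elt d (qcnj p) / of_rat (quad_norm d p)"
    unfolding qinv_def quad_elt_def qcnj_def by (simp add: of_rat_divide of_rat_minus diff_divide_distrib)
  also have "\<dots> = 1 / quad_elt d p"
  proof -
    have e: "of_rat (quad_norm d p) = quad_elt d p * quad_elt d (qcnj p)" using quad_norm_real[of d p] assms by simp
    then have "quad_elt d (qcnj p) \<noteq> 0" using N by auto
    then show ?thesis using e assms(3) by (simp add: field_simps)
  qed
  finally show ?thesis .
qed

definition aux_b :: "int \<Rightarrow> int" where "aux_b d = (if d = 2 then 3 else 2)"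

lemma rb_aux:
  assumes "squarefree d" "d > 1"
  shows "real_biquadratic d (aux_b d)"
proof -
  have "prime (2::int)" by simp
  moreover have "prime (3::int)"
    unfolding prime_int_iff'
  proof (intro conjI ballI)
    fix n :: int assume "n \<in> {2..<3}"
    then have "n = 2" by auto
    then show "\<not> n dvd 3" by simp
  qed simp
  ultimately have "squarefree (2::int)" "squarefree (3::int)" by (simp_all add: squarefree_prime)
  then show ?thesis using assms unfolding real_biquadratic_def aux_b_def by auto
qed

lemma quad_as_bq: "quad_elt d (x,y) = bq_elt d b False False (x,y,0,0)"
  by (simp add: quad_elt_def bq_elt_expand sg_def)

lemma quad_cnj_as_bq: "quad_elt d (qcnj (x,y)) = bq_elt d b True False (x,y,0,0)"
  by (simp add: quad_elt_def bq_elt_expand sg_def qcnj_def of_rat_minus)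

lemma quad_cnj_alg_int:
  assumes "squarefree d" "d > 1" "algebraic_int (quad_elt d p)"
  shows "algebraic_int (quad_elt d (qcnj p))"
proof -
  obtain x y where p: "p = (x,y)" by (cases p)
  have rb: "real_biquadratic d (aux_b d)" by (rule rb_aux[OF assms(1,2)])
  have "algebraic_int (bq_elt d (aux_b d) False False (x,y,0,0))" using assms(3) p quad_as_bq by metis
  then have "algebraic_int (bq_elt d (aux_b d) True False (x,y,0,0))" by (rule conj_alg_int[OF rb])
  then show ?thesis using p quad_cnj_as_bq by metis
qed

lemma rat_alg_int:
  assumes "algebraic_int (of_rat r :: real)"
  shows "r \<in> \<int>"
proof -
  have "(of_rat r :: real) \<in> \<int>" by (rule rational_algebraic_int_is_int[OF assms]) auto
  then show ?thesis by (rule of_rat_int_iff)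
qed

lemma sqfree_int_sq:
  fixes d :: int and z :: rat
  assumes "squarefree d" "of_int d * z^2 \<in> \<int>"
  shows "z \<in> \<int>"
proof -
  obtain n k where nk: "quotient_of z = (n, k)" by (cases "quotient_of z")
  have k: "k > 0" and cop: "coprime n k" and z: "z = of_int n / of_int k"
    using nk quotient_of_denom_pos quotient_of_coprime quotient_of_div by blast+
  from assms(2) obtain M where M: "of_int d * z^2 = of_int M" by (rule Ints_cases)
  have "of_int (d * n^2) = (of_int (M * k^2) :: rat)"
    using M k unfolding z by (simp add: field_simps power2_eq_square)
  then have e: "d * n^2 = M * k^2" by (simp only: of_int_eq_iff)
  have "k^2 dvd d * n^2" using e by simp
  moreover have "coprime (k^2) (n^2)" using cop by (simp add: coprime_commute)
  ultimately have "k^2 dvd d" by (simp add: coprime_dvd_mult_left_iff)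
  then have "k dvd 1" using assms(1) squarefreeD by blast
  then have "k = 1" using k by simp
  then show ?thesis using z by simp
qed

lemma quad_unit_props:
  assumes d: "squarefree d" "d > 1" and p: "p \<in> quad_units d"
  shows "2 * fst p \<in> \<int>" "2 * snd p \<in> \<int>" "quad_norm d p = 1 \<or> quad_norm d p = -1"
proof -
  obtain x y where pxy: "p = (x,y)" by (cases p)
  have u0: "quad_elt d p \<noteq> 0" and ai: "algebraic_int (quad_elt d p)" and aii: "algebraic_int (1 / quad_elt d p)"
    using p unfolding quad_units_def by auto
  have aic: "algebraic_int (quad_elt d (qcnj p))" by (rule quad_cnj_alg_int[OF d ai])
  have N0: "quad_norm d p \<noteq> 0" by (rule quad_nonzero_norm[OF d u0])
  have "quad_elt d p + quad_elt d (qcnj p) = of_rat (2 * x)"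
    unfolding pxy quad_elt_def qcnj_def by (simp add: of_rat_minus of_rat_mult)
  moreover have "algebraic_int (quad_elt d p + quad_elt d (qcnj p))" using alg_int_add_mult(1)[OF ai aic] .
  ultimately have "algebraic_int (of_rat (2 * x) :: real)" by simp
  then have "2 * x \<in> \<int>" by (rule rat_alg_int)
  then show "2 * fst p \<in> \<int>" using pxy by simp
  have "algebraic_int (of_rat (quad_norm d p) :: real)"
    using alg_int_add_mult(2)[OF ai aic] quad_norm_real[of d p] d by simp
  then have Ni: "quad_norm d p \<in> \<int>" by (rule rat_alg_int)
  have inv: "1 / quad_elt d p = quad_elt d (qinv d p)" using quad_inv[OF d u0] by simp
  have "algebraic_int (quad_elt d (qinv d p))" using aii inv by simp
  then have aic2: "algebraic_int (quad_elt d (qcnj (qinv d p)))" by (rule quad_cnj_alg_int[OF d])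
  have "quad_elt d (qinv d p) * quad_elt d (qcnj (qinv d p)) = of_rat (quad_norm d (qinv d p))"
    using quad_norm_real[of d "qinv d p"] d by simp
  also have "\<dots> = of_rat (1 / quad_norm d p)" using quad_norm_inv[OF N0] by simp
  finally have "algebraic_int (of_rat (1 / quad_norm d p) :: real)"
    using alg_int_add_mult(2)[OF \<open>algebraic_int (quad_elt d (qinv d p))\<close> aic2] by simp
  then have Nii: "1 / quad_norm d p \<in> \<int>" by (rule rat_alg_int)
  from Ni obtain n where n: "quad_norm d p = of_int n" by (rule Ints_cases)
  from Nii obtain m where m: "1 / quad_norm d p = of_int m" by (rule Ints_cases)
  have "of_int (n * m) = (1::rat)" using n m N0 by (simp add: field_simps)
  then have "n * m = 1" by (simp only: of_int_eq_1_iff)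
  then have "n = 1 \<or> n = -1" using zmult_eq_1_iff by blast
  then show "quad_norm d p = 1 \<or> quad_norm d p = -1" using n by auto
  have e1: "quad_elt d p - quad_elt d (qcnj p) = of_rat (2 * y) * sqrt (of_int d)"
    unfolding pxy quad_elt_def qcnj_def by (simp add: of_rat_minus of_rat_mult)
  have h: "algebraic_int (quad_elt d p - quad_elt d (qcnj p))"
    using alg_int_add_mult(1)[OF ai algebraic_int_minus[OF aic]] by simp
  have "algebraic_int ((quad_elt d p - quad_elt d (qcnj p)) * (quad_elt d p - quad_elt d (qcnj p)))"
    by (rule alg_int_add_mult(2)[OF h h])
  moreover have "(quad_elt d p - quad_elt d (qcnj p)) * (quad_elt d p - quad_elt d (qcnj p))
      = (of_rat (of_int d * (2*y)^2) :: real)"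
    unfolding e1 using d by (simp add: of_rat_mult of_rat_power power2_eq_square algebra_simps)
  ultimately have "algebraic_int (of_rat (of_int d * (2*y)^2) :: real)" by simp
  then have "of_int d * (2*y)^2 \<in> \<int>" by (rule rat_alg_int)
  then have "2 * y \<in> \<int>" by (rule sqfree_int_sq[OF d(1)])
  then show "2 * snd p \<in> \<int>" using pxy by simp
qed



lemma units_mul:
  assumes d: "squarefree d" "d > 1" and p: "p \<in> quad_units d" and r: "r \<in> quad_units d"
  shows "qmul d p r \<in> quad_units d"
proof -
  have d0: "d \<ge> 0" using d by simp
  have e: "quad_elt d (qmul d p r) = quad_elt d p * quad_elt d r" by (rule quad_mult[OF d0])
  have i: "1 / (quad_elt d p * quad_elt d r) = (1 / quad_elt d p) * (1 / quad_elt d r)" by simp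
  have pp: "quad_elt d p \<noteq> 0" "algebraic_int (quad_elt d p)" "algebraic_int (1 / quad_elt d p)"
    using p unfolding quad_units_def by auto
  have rr: "quad_elt d r \<noteq> 0" "algebraic_int (quad_elt d r)" "algebraic_int (1 / quad_elt d r)"
    using r unfolding quad_units_def by auto
  have h3: "algebraic_int (1 / (quad_elt d p * quad_elt d r))"
    unfolding i by (rule alg_int_add_mult(2)[OF pp(3) rr(3)])
  have h2: "algebraic_int (quad_elt d p * quad_elt d r)" by (rule alg_int_add_mult(2)[OF pp(2) rr(2)])
  show ?thesis unfolding quad_units_def mem_Collect_eq e using pp rr h2 h3 by simp
qed

lemma units_inv:
  assumes d: "squarefree d" "d > 1" and p: "p \<in> quad_units d"
  shows "qinv d p \<in> quad_units d"
proof -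
  have u0: "quad_elt d p \<noteq> 0" using p unfolding quad_units_def by auto
  have e: "quad_elt d (qinv d p) = 1 / quad_elt d p" by (rule quad_inv[OF d u0])
  show ?thesis using p u0 unfolding quad_units_def mem_Collect_eq e by auto
qed

lemma units_neg:
  assumes p: "p \<in> quad_units d"
  shows "qneg p \<in> quad_units d"
proof -
  have "1 / (- quad_elt d p) = - (1 / quad_elt d p)" by simp
  then show ?thesis using p unfolding quad_units_def mem_Collect_eq quad_neg by auto
qed

lemma quad_one: "quad_elt d (1,0) = 1" by (simp add: quad_elt_def)

lemma units_one: "(1,0) \<in> quad_units d"
  unfolding quad_units_def mem_Collect_eq quad_one by (auto intro: int_imp_algebraic_int)

primrec qpow :: "int \<Rightarrow> rat\<times>rat \<Rightarrow> nat \<Rightarrow> rat\<times>rat" where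
  "qpow d p 0 = (1,0)"
| "qpow d p (Suc n) = qmul d p (qpow d p n)"

lemma quad_pow: "d \<ge> 0 \<Longrightarrow> quad_elt d (qpow d p n) = quad_elt d p ^ n"
  by (induction n) (simp_all add: quad_one quad_mult)

lemma norm_pow: "quad_norm d (qpow d p n) = quad_norm d p ^ n"
  by (induction n) (simp add: quad_norm_def, simp add: quad_norm_mult)

lemma units_pow:
  assumes d: "squarefree d" "d > 1" and p: "p \<in> quad_units d"
  shows "qpow d p n \<in> quad_units d"
  by (induction n) (simp_all add: units_one units_mul[OF d p])

definition qpowi :: "int \<Rightarrow> rat\<times>rat \<Rightarrow> int \<Rightarrow> rat\<times>rat" where
  "qpowi d p k = (if k \<ge> 0 then qpow d p (nat k) else qpow d (qinv d p) (nat (-k)))"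

lemma quad_powi:
  assumes d: "squarefree d" "d > 1" and u0: "quad_elt d p \<noteq> 0"
  shows "quad_elt d (qpowi d p k) = quad_elt d p powi k"
  using d u0 by (simp add: qpowi_def power_int_def quad_pow quad_inv inverse_eq_divide)

lemma norm_powi:
  assumes "quad_norm d p \<noteq> 0"
  shows "quad_norm d (qpowi d p k) = quad_norm d p powi k"
  using assms by (simp add: qpowi_def power_int_def norm_pow quad_norm_inv inverse_eq_divide)

lemma units_powi:
  assumes d: "squarefree d" "d > 1" and p: "p \<in> quad_units d"
  shows "qpowi d p k \<in> quad_units d"
  unfolding qpowi_def using units_pow[OF d p] units_pow[OF d units_inv[OF d p]] by simp

lemma big_unit_coords:
  assumes d: "squarefree d" "d > 1" and p: "p \<in> quad_units d" and big: "quad_elt d p > 1"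
  shows "fst p > 0" "snd p > 0" "of_rat (fst p) \<le> quad_elt d p" "of_rat (snd p) \<le> quad_elt d p"
proof -
  obtain x y where pxy: "p = (x,y)" by (cases p)
  define u where "u = quad_elt d p"
  define u' where "u' = quad_elt d (qcnj p)"
  have N: "quad_norm d p = 1 \<or> quad_norm d p = -1" using quad_unit_props(3)[OF d p] .
  have uu: "u * u' = 1 \<or> u * u' = -1" using quad_norm_real[of d p] d N unfolding u_def u'_def by auto
  have u1: "u > 1" using big unfolding u_def .
  have au': "\<bar>u'\<bar> < 1"
  proof -
    have "\<bar>u\<bar> * \<bar>u'\<bar> = 1" using uu by (metis abs_minus_cancel abs_mult abs_one)
    then show ?thesis using u1 by (metis abs_of_pos less_one mult_less_cancel_left2 not_less_iff_gr_or_eq zero_less_one order_less_trans mult.commute abs_ge_zero mult_le_cancel_left1 linorder_not_le)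
  qed
  have sx: "u + u' = 2 * of_rat x" unfolding u_def u'_def pxy quad_elt_def qcnj_def by (simp add: of_rat_minus)
  have sy: "u - u' = 2 * of_rat y * sqrt (of_int d)" unfolding u_def u'_def pxy quad_elt_def qcnj_def by (simp add: of_rat_minus)
  have sd: "sqrt (of_int d) \<ge> (1::real)" using d by simp
  have "of_rat x > (0::real)" using sx au' u1 by linarith
  then show "fst p > 0" using pxy by simp
  have yd: "of_rat y * sqrt (of_int d) > (0::real)" using sy au' u1 by linarith
  then have ypos: "of_rat y > (0::real)" using sd by (simp add: zero_less_mult_iff)
  then show "snd p > 0" using pxy by simp
  show "of_rat (fst p) \<le> quad_elt d p" using sx au' u1 pxy unfolding u_def by simp
  have "of_rat y \<le> of_rat y * sqrt (of_int d)" using ypos sd by (simp add: mult_le_cancel_left1)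
  also have "\<dots> \<le> u" using sy au' u1 by linarith
  finally show "of_rat (snd p) \<le> quad_elt d p" using pxy unfolding u_def by simp
qed


lemma exists_big_unit:
  assumes d: "squarefree d" "d > 1" and p0: "p0 \<in> quad_units d" "quad_norm d p0 = -1"
  shows "\<exists>E\<in>quad_units d. quad_elt d E > 1"
proof -
  define u where "u = quad_elt d p0"
  have u0: "u \<noteq> 0" using p0 unfolding quad_units_def u_def by auto
  have not1: "\<bar>u\<bar> \<noteq> 1"
  proof
    assume "\<bar>u\<bar> = 1"
    then have "u = 1 \<or> u = -1" by linarith
    then have "quad_elt d p0 = quad_elt d (1,0) \<or> quad_elt d p0 = quad_elt d (-1,0)"
      unfolding u_def by (auto simp: quad_elt_def)
    then have "p0 = (1,0) \<or> p0 = (-1,0)" using quad_inj[OF d] by blast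
    then show False using p0(2) by (auto simp: quad_norm_def)
  qed
  have ui: "quad_elt d (qinv d p0) = 1 / u" using quad_inv[OF d u0[unfolded u_def]] u_def by simp
  have un: "quad_elt d (qneg p0) = - u" unfolding u_def by (simp add: quad_neg)
  have uni: "quad_elt d (qneg (qinv d p0)) = - (1 / u)" using ui by (simp add: quad_neg)
  have U: "p0 \<in> quad_units d" "qneg p0 \<in> quad_units d" "qinv d p0 \<in> quad_units d" "qneg (qinv d p0) \<in> quad_units d"
    using p0(1) units_neg units_inv[OF d] by blast+
  consider "u > 1" | "u < -1" | "0 < u \<and> u < 1" | "-1 < u \<and> u < 0" using not1 u0 by linarith
  then show ?thesis
  proof cases
    case 1 then show ?thesis using U(1) u_def by blast
  next
    case 2 then show ?thesis using U(2) un by (intro bexI[of _ "qneg p0"]) auto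
  next
    case 3 then have "1 / u > 1" by simp
    then show ?thesis using U(3) ui by (intro bexI[of _ "qinv d p0"]) auto
  next
    case 4 then have "- (1 / u) > 1" by (simp add: field_simps)
    then show ?thesis using U(4) uni by (intro bexI[of _ "qneg (qinv d p0)"]) auto
  qed
qed

lemma min_big_unit:
  assumes d: "squarefree d" "d > 1" and E: "E \<in> quad_units d" "quad_elt d E > 1"
  shows "\<exists>\<eta>\<in>quad_units d. quad_elt d \<eta> > 1 \<and>
           (\<forall>p\<in>quad_units d. quad_elt d p > 1 \<longrightarrow> quad_elt d \<eta> \<le> quad_elt d p)"
proof -
  define S where "S = {p\<in>quad_units d. 1 < quad_elt d p \<and> quad_elt d p \<le> quad_elt d E}"
  define M where "M = \<lceil>2 * quad_elt d E\<rceil>"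
  have "S \<subseteq> (\<lambda>(X,Y). (of_int X / 2, of_int Y / 2)) ` ({1..M} \<times> {1..M})"
  proof
    fix p assume pS: "p \<in> S"
    then have pu: "p \<in> quad_units d" and p1: "quad_elt d p > 1" and pE: "quad_elt d p \<le> quad_elt d E"
      unfolding S_def by auto
    obtain X where X: "2 * fst p = of_int X" using quad_unit_props(1)[OF d pu] by (auto elim: Ints_cases)
    obtain Y where Y: "2 * snd p = of_int Y" using quad_unit_props(2)[OF d pu] by (auto elim: Ints_cases)
    note bc = big_unit_coords[OF d pu p1]
    have "X > 0" using bc(1) X by (metis of_int_0_less_iff zero_less_mult_iff zero_less_numeral)
    moreover have "Y > 0" using bc(2) Y by (metis of_int_0_less_iff zero_less_mult_iff zero_less_numeral)
    moreover have "real_of_int X \<le> 2 * quad_elt d E"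
    proof -
      have "real_of_int X = 2 * of_rat (fst p)" using X by (metis of_rat_mult of_rat_numeral_eq of_rat_of_int_eq)
      then show ?thesis using bc(3) pE by linarith
    qed
    then have "X \<le> M" unfolding M_def by linarith
    moreover have "real_of_int Y \<le> 2 * quad_elt d E"
    proof -
      have "real_of_int Y = 2 * of_rat (snd p)" using Y by (metis of_rat_mult of_rat_numeral_eq of_rat_of_int_eq)
      then show ?thesis using bc(4) pE by linarith
    qed
    then have "Y \<le> M" unfolding M_def by linarith
    moreover have "p = (of_int X / 2, of_int Y / 2)" using X Y by (cases p) (auto simp: field_simps)
    ultimately show "p \<in> (\<lambda>(X,Y). (of_int X / 2, of_int Y / 2)) ` ({1..M} \<times> {1..M})"
      by (intro image_eqI[of _ _ "(X,Y)"]) auto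
  qed
  then have finS: "finite S" by (rule finite_subset) auto
  have ES: "E \<in> S" using E unfolding S_def by auto
  define m where "m = Min (quad_elt d ` S)"
  have "m \<in> quad_elt d ` S" unfolding m_def using finS ES by (intro Min_in) auto
  then obtain \<eta> where \<eta>S: "\<eta> \<in> S" and \<eta>m: "quad_elt d \<eta> = m" by auto
  have mle: "m \<le> quad_elt d p" if "p \<in> S" for p unfolding m_def using finS that by (intro Min_le) auto
  show ?thesis
  proof (intro bexI conjI ballI impI)
    show "\<eta> \<in> quad_units d" "quad_elt d \<eta> > 1" using \<eta>S unfolding S_def by auto
    fix p assume pu: "p \<in> quad_units d" and p1: "quad_elt d p > 1"
    show "quad_elt d \<eta> \<le> quad_elt d p"
    proof (cases "quad_elt d p \<le> quad_elt d E")
      case True then have "p \<in> S" using pu p1 unfolding S_def by auto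
      then show ?thesis using mle \<eta>m by auto
    next
      case False
      have "quad_elt d \<eta> \<le> quad_elt d E" using mle[OF ES] \<eta>m by simp
      then show ?thesis using False by simp
    qed
  qed
qed


lemma all_units_powers:
  assumes d: "squarefree d" "d > 1" and \<eta>: "\<eta> \<in> quad_units d" "quad_elt d \<eta> > 1"
      and mn: "\<forall>p\<in>quad_units d. quad_elt d p > 1 \<longrightarrow> quad_elt d \<eta> \<le> quad_elt d p"
      and p: "p \<in> quad_units d"
  shows "\<exists>k. quad_elt d p = quad_elt d \<eta> powi k \<or> quad_elt d p = - (quad_elt d \<eta> powi k)"
proof -
  define e where "e = quad_elt d \<eta>"
  have e1: "e > 1" using \<eta> e_def by simp
  define pv where "pv = (if quad_elt d p > 0 then p else qneg p)"
  have pvu: "pv \<in> quad_units d" unfolding pv_def using p units_neg by auto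
  have p0: "quad_elt d p \<noteq> 0" using p unfolding quad_units_def by auto
  define v where "v = quad_elt d pv"
  have v0: "v > 0" unfolding v_def pv_def using p0 by (auto simp: quad_neg)
  have pv_eq: "quad_elt d p = v \<or> quad_elt d p = - v" unfolding v_def pv_def by (auto simp: quad_neg)
  define k where "k = \<lfloor>log e v\<rfloor>"
  have k1: "real_of_int k \<le> log e v" "log e v < real_of_int k + 1" unfolding k_def by linarith+
  have ek: "e powi k = e powr (real_of_int k)" using e1 by (simp add: powr_real_of_int')
  have lo: "e powr (real_of_int k) \<le> v"
  proof -
    have "e powr (real_of_int k) \<le> e powr (log e v)" using k1(1) e1 by simp
    also have "\<dots> = v" using e1 v0 by simp
    finally show ?thesis .
  qed
  have hi: "v < e * e powr (real_of_int k)"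
  proof -
    have "v = e powr (log e v)" using e1 v0 by simp
    also have "\<dots> < e powr (real_of_int k + 1)" using k1(2) e1 by simp
    also have "\<dots> = e * e powr (real_of_int k)" using e1 by (simp add: powr_add)
    finally show ?thesis .
  qed
  have epos: "e powr (real_of_int k) > 0" using e1 by simp
  define tp where "tp = qmul d pv (qpowi d \<eta> (-k))"
  have tpu: "tp \<in> quad_units d" unfolding tp_def by (intro units_mul[OF d pvu] units_powi[OF d \<eta>(1)])
  have "quad_elt d tp = v * e powi (-k)" unfolding tp_def v_def e_def
    using d \<eta> by (simp add: quad_mult quad_powi)
  also have "\<dots> = v / e powr (real_of_int k)" using ek by (simp add: power_int_minus divide_inverse)
  finally have t: "quad_elt d tp = v / e powr (real_of_int k)" .
  have t1: "quad_elt d tp \<ge> 1" unfolding t using lo epos by simp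
  have t2: "quad_elt d tp < e" unfolding t using hi epos by (simp add: divide_less_eq)
  have "quad_elt d tp = 1"
  proof (rule ccontr)
    assume "quad_elt d tp \<noteq> 1"
    then have "quad_elt d tp > 1" using t1 by simp
    then have "e \<le> quad_elt d tp" using mn tpu e_def by blast
    then show False using t2 by simp
  qed
  then have "v = e powi k" using t ek epos by simp
  then show ?thesis using pv_eq e_def by blast
qed

theorem fund_unit_exists:
  assumes d: "squarefree d" "d > 1" and p0: "p0 \<in> quad_units d" "quad_norm d p0 = -1"
  shows "\<exists>e. fundamental_unit d e \<and> quad_norm d e = -1"
proof -
  obtain E where E: "E \<in> quad_units d" "quad_elt d E > 1" using exists_big_unit[OF d p0] by blast
  obtain \<eta> where \<eta>: "\<eta> \<in> quad_units d" "quad_elt d \<eta> > 1"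
    and mn: "\<forall>p\<in>quad_units d. quad_elt d p > 1 \<longrightarrow> quad_elt d \<eta> \<le> quad_elt d p"
    using min_big_unit[OF d E] by blast
  have fu: "fundamental_unit d \<eta>"
    unfolding fundamental_unit_def using \<eta> all_units_powers[OF d \<eta> mn] by blast
  have "quad_norm d \<eta> = -1"
  proof (rule ccontr)
    assume "quad_norm d \<eta> \<noteq> -1"
    then have N1: "quad_norm d \<eta> = 1" using quad_unit_props(3)[OF d \<eta>(1)] by blast
    have e0: "quad_elt d \<eta> \<noteq> 0" using \<eta> by simp
    obtain k where "quad_elt d p0 = quad_elt d \<eta> powi k \<or> quad_elt d p0 = - (quad_elt d \<eta> powi k)"
      using all_units_powers[OF d \<eta> mn p0(1)] by blast
    then have "quad_elt d p0 = quad_elt d (qpowi d \<eta> k) \<or> quad_elt d p0 = quad_elt d (qneg (qpowi d \<eta> k))"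
      using quad_powi[OF d e0] by (auto simp: quad_neg)
    then have "p0 = qpowi d \<eta> k \<or> p0 = qneg (qpowi d \<eta> k)" using quad_inj[OF d] by blast
    then have "quad_norm d p0 = quad_norm d \<eta> powi k" using norm_powi[of d \<eta> k] N1 by (auto simp: quad_norm_neg)
    then show False using N1 p0(2) by simp
  qed
  then show ?thesis using fu by blast
qed


lemma minus_one_powi_odd: "((-1::rat) powi k = -1) \<Longrightarrow> odd k"
  by (cases "even k") (auto simp: power_int_minus_left)

lemma norm_m1_prod_square:
  assumes d: "squarefree d" "d > 1" and p: "p \<in> quad_units d" "quad_norm d p = -1"
      and r: "r \<in> quad_units d" "quad_norm d r = -1"
  shows "\<exists>w\<in>quad_units d. qmul d p r = qmul d w w \<or> qmul d p r = qneg (qmul d w w)"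
proof -
  obtain \<eta> where fu: "fundamental_unit d \<eta>" and N\<eta>: "quad_norm d \<eta> = -1"
    using fund_unit_exists[OF d p] by blast
  have \<eta>u: "\<eta> \<in> quad_units d" and e1: "quad_elt d \<eta> > 1"
    and allp: "\<forall>u\<in>quad_units d. \<exists>k::int. quad_elt d u = quad_elt d \<eta> powi k \<or> quad_elt d u = - (quad_elt d \<eta> powi k)"
    using fu unfolding fundamental_unit_def by auto
  define e where "e = quad_elt d \<eta>"
  have e0: "quad_elt d \<eta> \<noteq> 0" using e1 by simp
  have d0: "d \<ge> 0" using d by simp
  have key: "\<exists>k. odd k \<and> (quad_elt d x = e powi k \<or> quad_elt d x = - (e powi k))"
    if x: "x \<in> quad_units d" "quad_norm d x = -1" for x
  proof -
    obtain k where k: "quad_elt d x = e powi k \<or> quad_elt d x = - (e powi k)" using allp x(1) e_def by blast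
    then have "quad_elt d x = quad_elt d (qpowi d \<eta> k) \<or> quad_elt d x = quad_elt d (qneg (qpowi d \<eta> k))"
      using quad_powi[OF d e0] e_def by (auto simp: quad_neg)
    then have "x = qpowi d \<eta> k \<or> x = qneg (qpowi d \<eta> k)" using quad_inj[OF d] by blast
    then have "quad_norm d x = quad_norm d \<eta> powi k" using norm_powi[of d \<eta> k] N\<eta> by (auto simp: quad_norm_neg)
    then have "(-1::rat) powi k = -1" using x(2) N\<eta> by simp
    then show ?thesis using minus_one_powi_odd k by blast
  qed
  obtain i where i: "odd i" "quad_elt d p = e powi i \<or> quad_elt d p = - (e powi i)" using key[OF p] by blast
  obtain j where j: "odd j" "quad_elt d r = e powi j \<or> quad_elt d r = - (e powi j)" using key[OF r] by blast
  obtain h where h: "i + j = h + h" using i(1) j(1) by (metis odd_add odd_two_times_div_two_succ mult_2 add.commute add_diff_cancel_left' evenE)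
  define w where "w = qpowi d \<eta> h"
  have wu: "w \<in> quad_units d" unfolding w_def by (rule units_powi[OF d \<eta>u])
  have ew: "quad_elt d w = e powi h" unfolding w_def e_def by (rule quad_powi[OF d e0])
  have e0': "e \<noteq> 0" using e0 e_def by simp
  have "e powi i * e powi j = e powi h * e powi h"
    using h e0' by (metis power_int_add)
  then have "quad_elt d (qmul d p r) = quad_elt d (qmul d w w) \<or> quad_elt d (qmul d p r) = quad_elt d (qneg (qmul d w w))"
    using i(2) j(2) ew by (auto simp: quad_mult[OF d0] quad_neg)
  then show ?thesis using quad_inj[OF d] wu by blast
qed



definition red :: "rat \<Rightarrow> int \<Rightarrow> bool" where
  "red x c \<longleftrightarrow> (\<exists>n d. x = of_int n / of_int d \<and> coprime d 13 \<and> [n = c * d] (mod 13))"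

definition pint :: "rat \<Rightarrow> bool" where "pint x \<longleftrightarrow> (\<exists>c. red x c)"

lemma red_int: "red (of_int n) n"
  unfolding red_def by (intro exI[of _ n] exI[of _ 1]) auto

lemma red_frac: "coprime d 13 \<Longrightarrow> [n = c * d] (mod 13) \<Longrightarrow> red (of_int n / of_int d) c"
  unfolding red_def by blast

lemma red_add: "red x c \<Longrightarrow> red y e \<Longrightarrow> red (x + y) (c + e)"
proof -
  assume "red x c" "red y e"
  then obtain n d n' d' where x: "x = of_int n / of_int d" "coprime d 13" "[n = c * d] (mod 13)"
    and y: "y = of_int n' / of_int d'" "coprime d' 13" "[n' = e * d'] (mod 13)"
    unfolding red_def by blast
  have d0: "d \<noteq> 0" "d' \<noteq> 0" using x(2) y(2) by auto
  have "x + y = of_int (n * d' + n' * d) / of_int (d * d')" using x(1) y(1) d0 by (simp add: field_simps)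
  moreover have "coprime (d * d') 13" using x(2) y(2) by simp
  moreover have "[n * d' + n' * d = (c + e) * (d * d')] (mod 13)"
  proof -
    have "[n * d' + n' * d = c * d * d' + e * d' * d] (mod 13)"
      using x(3) y(3) by (intro cong_add cong_mult cong_refl)
    then show ?thesis by (simp add: algebra_simps)
  qed
  ultimately show ?thesis unfolding red_def by blast
qed

lemma red_mult: "red x c \<Longrightarrow> red y e \<Longrightarrow> red (x * y) (c * e)"
proof -
  assume "red x c" "red y e"
  then obtain n d n' d' where x: "x = of_int n / of_int d" "coprime d 13" "[n = c * d] (mod 13)"
    and y: "y = of_int n' / of_int d'" "coprime d' 13" "[n' = e * d'] (mod 13)"
    unfolding red_def by blast
  have "x * y = of_int (n * n') / of_int (d * d')" using x(1) y(1) by simp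
  moreover have "coprime (d * d') 13" using x(2) y(2) by simp
  moreover have "[n * n' = (c * e) * (d * d')] (mod 13)"
  proof -
    have "[n * n' = (c * d) * (e * d')] (mod 13)" using x(3) y(3) by (intro cong_mult)
    then show ?thesis by (simp add: algebra_simps)
  qed
  ultimately show ?thesis unfolding red_def by blast
qed

lemma red_cong: "red x c \<Longrightarrow> [c = e] (mod 13) \<Longrightarrow> red x e"
proof -
  assume "red x c" "[c = e] (mod 13)"
  then obtain n d where x: "x = of_int n / of_int d" "coprime d 13" "[n = c * d] (mod 13)"
    unfolding red_def by blast
  have "[c * d = e * d] (mod 13)" using \<open>[c = e] (mod 13)\<close> by (intro cong_mult cong_refl)
  then have "[n = e * d] (mod 13)" using x(3) cong_trans by blast
  then show ?thesis using x unfolding red_def by blast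
qed


lemma red_unique: "red x c \<Longrightarrow> red x e \<Longrightarrow> [c = e] (mod 13)"
proof -
  assume "red x c" "red x e"
  then obtain n d n' d' where x: "x = of_int n / of_int d" "coprime d 13" "[n = c * d] (mod 13)"
    and y: "x = of_int n' / of_int d'" "coprime d' 13" "[n' = e * d'] (mod 13)"
    unfolding red_def by blast
  have d0: "d \<noteq> 0" "d' \<noteq> 0" using x(2) y(2) by auto
  have "of_int n / of_int d = (of_int n' / of_int d' :: rat)" using x(1) y(1) by simp
  then have "of_int (n * d') = (of_int (n' * d) :: rat)" using d0 by (simp add: field_simps)
  then have nd: "n * d' = n' * d" by (simp only: of_int_eq_iff)
  have c1: "[n * d' = c * d * d'] (mod 13)" using x(3) by (intro cong_mult cong_refl)
  have c2: "[n' * d = e * d' * d] (mod 13)" using y(3) by (intro cong_mult cong_refl)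
  have "[c * (d * d') = e * (d * d')] (mod 13)"
    using c1 c2 nd by (metis cong_sym cong_trans mult.assoc mult.commute)
  moreover have "coprime (d * d') 13" using x(2) y(2) by simp
  ultimately show ?thesis using cong_mult_rcancel by blast
qed

lemma red_neg: "red x c \<Longrightarrow> red (- x) (- c)"
  using red_mult[OF red_int[of "-1"]] by fastforce

lemma red_zero_mod: "red x c \<Longrightarrow> 13 dvd k \<Longrightarrow> red (of_int k * x) 0"
proof -
  assume "red x c" "13 dvd k"
  then have "red (of_int k * x) (k * c)" using red_mult[OF red_int] by blast
  moreover have "[k * c = 0] (mod 13)" using \<open>13 dvd k\<close> by (simp add: cong_0_iff)
  ultimately show ?thesis by (rule red_cong)
qed

lemma pint_frac:
  assumes "coprime d 13"
  shows "pint (of_int n / of_int d)"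
proof -
  obtain v where v: "[d * v = 1] (mod 13)" using cong_solve_coprime_int[OF assms] by blast
  have "[n * (d * v) = n * 1] (mod 13)" using v by (intro cong_mult cong_refl)
  then have "[n = (n * v) * d] (mod 13)" by (simp add: algebra_simps cong_sym_eq)
  then show ?thesis unfolding pint_def using red_frac[OF assms] by blast
qed

lemma pint_int: "pint (of_int n)"
  unfolding pint_def using red_int by blast

lemma pint_half: "pint (of_int n / 2)"
  using pint_frac[of 2 n] by simp

lemma pint_add: "pint x \<Longrightarrow> pint y \<Longrightarrow> pint (x + y)"
  unfolding pint_def using red_add by blast

lemma pint_mult: "pint x \<Longrightarrow> pint y \<Longrightarrow> pint (x * y)"
  unfolding pint_def using red_mult by blast

lemma pint_neg: "pint x \<Longrightarrow> pint (- x)"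
  unfolding pint_def using red_neg by blast

lemma pint_of_int_mult: "pint x \<Longrightarrow> pint (of_int k * x)"
  using pint_mult[OF pint_int] by blast

lemma half_int_pint: "2 * x \<in> \<int> \<Longrightarrow> pint x"
proof -
  assume "2 * x \<in> \<int>"
  then obtain n where "2 * x = of_int n" by (rule Ints_cases)
  then have "x = of_int n / 2" by simp
  then show ?thesis using pint_half[of n] by (simp only:)
qed



lemma prime13: "prime (13::int)"
  unfolding prime_int_iff'
proof (intro conjI ballI)
  fix n :: int assume "n \<in> {2..<13}"
  then have "2 \<le> n" "n < 13" by auto
  then have "n = 2 \<or> n = 3 \<or> n = 4 \<or> n = 5 \<or> n = 6 \<or> n = 7 \<or> n = 8 \<or> n = 9 \<or> n = 10 \<or> n = 11 \<or> n = 12" by presburger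
  then show "\<not> n dvd 13" by auto
qed simp

lemma cop13: "\<not> 13 dvd (x::int) \<Longrightarrow> coprime x 13"
  using prime13 prime_imp_coprime[of 13 x] by (simp add: coprime_commute)

lemma bq_e_alg_int:
  assumes "a \<ge> 0" "b \<ge> 0"
  shows "algebraic_int (bq_elt a b False False (0,1,0,0))" "algebraic_int (bq_elt a b False False (0,0,1,0))"
        "algebraic_int (bq_elt a b False False (0,0,0,1))"
proof -
  have ia: "algebraic_int (sqrt (of_int a) :: real)" by (intro algebraic_int_sqrt int_imp_algebraic_int) auto
  have ib: "algebraic_int (sqrt (of_int b) :: real)" by (intro algebraic_int_sqrt int_imp_algebraic_int) auto
  show "algebraic_int (bq_elt a b False False (0,1,0,0))" using ia by (simp add: bq_elt_expand sg_def)
  show "algebraic_int (bq_elt a b False False (0,0,1,0))" using ib by (simp add: bq_elt_expand sg_def)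
  show "algebraic_int (bq_elt a b False False (0,0,0,1))" using alg_int_add_mult(2)[OF ia ib] by (simp add: bq_elt_expand sg_def)
qed

lemma bq_mult_alg_int:
  assumes "real_biquadratic a b" "algebraic_int (bq_elt a b False False q)" "algebraic_int (bq_elt a b False False r)"
  shows "algebraic_int (bq_elt a b False False (bmul a b q r))"
proof -
  have "a \<ge> 0" "b \<ge> 0" using assms(1) unfolding real_biquadratic_def by auto
  then show ?thesis using alg_int_add_mult(2)[OF assms(2,3)] bq_mult by metis
qed

lemma rat_int_obtain: "(x::rat) \<in> \<int> \<Longrightarrow> \<exists>n. x = of_int n"
  by (auto elim: Ints_cases)

lemma bq_pint:
  assumes ab: "real_biquadratic a b" and b13: "13 dvd b" and a13: "\<not> 13 dvd a"
      and ai: "algebraic_int (bq_elt a b False False (q0,q1,q2,q3))"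
  shows "pint q0" "pint q1" "pint q2" "pint q3"
proof -
  have a: "a > 1" "squarefree a" and b: "b > 1" "squarefree b" using ab unfolding real_biquadratic_def by auto
  have a0: "a \<ge> 0" "b \<ge> 0" using a b by auto
  note e = bq_e_alg_int[OF a0]
  let ?q = "(q0,q1,q2,q3)"
  have t0: "4 * q0 \<in> \<int>" using trace_int[OF ab ai] by simp
  have t1: "4 * (of_int a * q1) \<in> \<int>" using trace_int[OF ab bq_mult_alg_int[OF ab ai e(1)]] by (simp add: bmul_def)
  have t2: "4 * (of_int b * q2) \<in> \<int>" using trace_int[OF ab bq_mult_alg_int[OF ab ai e(2)]] by (simp add: bmul_def)
  have t3: "4 * (of_int a * of_int b * q3) \<in> \<int>" using trace_int[OF ab bq_mult_alg_int[OF ab ai e(3)]] by (simp add: bmul_def)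
  have sq: "algebraic_int (bq_elt a b False False (bmul a b ?q ?q))" by (rule bq_mult_alg_int[OF ab ai ai])
  have k0: "4 * (q0*q0 + of_int a*q1*q1 + of_int b*q2*q2 + of_int a * of_int b*q3*q3) \<in> \<int>"
    using trace_int[OF ab sq] by (simp add: bmul_def)
  have v0: "4 * (of_int a * (q0*q1 + q1*q0 + of_int b*(q2*q3 + q3*q2))) \<in> \<int>"
    using trace_int[OF ab bq_mult_alg_int[OF ab sq e(1)]] by (simp add: bmul_def)
  obtain T0 where T0: "4 * q0 = of_int T0" using rat_int_obtain[OF t0] by blast
  obtain T1 where T1: "4 * (of_int a * q1) = of_int T1" using rat_int_obtain[OF t1] by blast
  obtain T2 where T2: "4 * (of_int b * q2) = of_int T2" using rat_int_obtain[OF t2] by blast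
  obtain T3 where T3: "4 * (of_int a * of_int b * q3) = of_int T3" using rat_int_obtain[OF t3] by blast
  obtain K where K: "4 * (q0*q0 + of_int a*q1*q1 + of_int b*q2*q2 + of_int a * of_int b*q3*q3) = of_int K"
    using rat_int_obtain[OF k0] by blast
  obtain V where V: "4 * (of_int a * (q0*q1 + q1*q0 + of_int b*(q2*q3 + q3*q2))) = of_int V"
    using rat_int_obtain[OF v0] by blast
  have an: "(of_int a :: rat) \<noteq> 0" "(of_int b :: rat) \<noteq> 0" using a b by auto
  have qq: "q0 = of_int T0 / 4" "q1 = of_int T1 / (4 * of_int a)" "q2 = of_int T2 / (4 * of_int b)"
           "q3 = of_int T3 / (4 * of_int a * of_int b)"
    using T0 T1 T2 T3 an by (auto simp: field_simps)
  have "of_int (a*b*T0^2 + b*T1^2 + a*T2^2 + T3^2) = (of_int (4*a*b*K) :: rat)"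
    using K an unfolding qq by (simp add: field_simps power2_eq_square)
  then have E1: "a*b*T0^2 + b*T1^2 + a*T2^2 + T3^2 = 4*a*b*K" by (simp only: of_int_eq_iff)
  have "of_int (4*a*(b*T0*T1 + T2*T3)) = (of_int (4*a*(2*b*V)) :: rat)"
    using V an unfolding qq by (simp add: field_simps power2_eq_square)
  then have "4*a*(b*T0*T1 + T2*T3) = 4*a*(2*b*V)" by (simp only: of_int_eq_iff)
  then have E2: "b*T0*T1 + T2*T3 = 2*b*V" using a by simp
  have "T2 * T3 = b * (2*V - T0*T1)" using E2 by (simp add: algebra_simps)
  then have "13 dvd T2 * T3" using b13 by simp
  then have o23: "13 dvd T2 \<or> 13 dvd T3" by (rule prime_dvd_multD[OF prime13])
  have "a * T2^2 + T3^2 = b * (4*a*K - a*T0^2 - T1^2)" using E1 by (simp add: algebra_simps)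
  then have h1: "13 dvd a * T2^2 + T3^2" using b13 by simp
  have d2: "13 dvd T2"
  proof (cases "13 dvd T2")
    case False
    then have "13 dvd T3" using o23 by blast
    then have "13 dvd T3^2" by (simp add: power2_eq_square)
    then have "13 dvd (a * T2^2 + T3^2) - T3^2" by (rule dvd_diff[OF h1])
    then have "13 dvd a * T2^2" by simp
    then have "13 dvd T2^2" using a13 prime_dvd_multD[OF prime13] by blast
    then show "13 dvd T2" by (rule prime_dvd_power[OF prime13])
  qed simp
  have d3: "13 dvd T3"
  proof -
    have "13 dvd a * T2^2" using d2 by (simp add: power2_eq_square)
    then have "13 dvd (a * T2^2 + T3^2) - a * T2^2" using h1 by (intro dvd_diff)
    then have "13 dvd T3^2" by simp
    then show "13 dvd T3" by (rule prime_dvd_power[OF prime13])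
  qed
  have d23: "13 dvd T2" "13 dvd T3" using d2 d3 by auto
  obtain b0 where b0: "b = 13 * b0" using b13 by blast
  have nb0: "\<not> 13 dvd b0"
  proof
    assume "13 dvd b0"
    then obtain c where "b0 = 13 * c" by blast
    then have "b = 13^2 * c" using b0 by (simp add: power2_eq_square)
    then have "13^2 dvd b" by simp
    then have "(13::int) dvd 1" using b(2) squarefreeD by blast
    then show False by simp
  qed
  obtain t2 where t2': "T2 = 13 * t2" using d23(1) by blast
  obtain t3 where t3': "T3 = 13 * t3" using d23(2) by blast
  have c4: "\<not> 13 dvd (4::int)" by simp
  have c0: "coprime (4::int) 13" using cop13[OF c4] .
  show "pint q0" unfolding qq using pint_frac[OF c0, of T0] by simp
  have "\<not> 13 dvd 4 * a" using a13 c4 prime_dvd_multD[OF prime13] by blast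
  then have c1: "coprime (4*a) 13" by (rule cop13)
  show "pint q1" unfolding qq using pint_frac[OF c1, of T1] by simp
  have nb: "\<not> 13 dvd 4 * b0" using nb0 c4 prime_dvd_multD[OF prime13] by blast
  then have c2: "coprime (4*b0) 13" by (rule cop13)
  have "q2 = of_int t2 / of_int (4 * b0)" unfolding qq t2' b0 by simp
  then show "pint q2" using pint_frac[OF c2, of t2] by simp
  have "\<not> 13 dvd (4 * b0) * a" using nb a13 prime_dvd_multD[OF prime13] by blast
  then have c3: "coprime ((4*b0)*a) 13" by (rule cop13)
  have "q3 = of_int t3 / of_int ((4 * b0) * a)" unfolding qq t3' b0 by simp
  then show "pint q3" using pint_frac[OF c3, of t3] by simp
qed



lemma red_of_int_mult: "red x c \<Longrightarrow> red (of_int k * x) (k * c)"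
  using red_mult[OF red_int] by blast

lemma pint_obtain: "pint x \<Longrightarrow> \<exists>c. red x c"
  unfolding pint_def by blast

lemma red_pint: "red x c \<Longrightarrow> pint x"
  unfolding pint_def by blast

lemma bmul_red:
  assumes b13: "13 dvd b"
      and q: "red q0 c0" "red q1 c1" "pint q2" "pint q3"
      and p: "red p0 e0" "red p1 e1" "pint p2" "pint p3"
  shows "red (fst (bmul a b (q0,q1,q2,q3) (p0,p1,p2,p3))) (c0*e0 + a*(c1*e1))"
        "red (fst (snd (bmul a b (q0,q1,q2,q3) (p0,p1,p2,p3)))) (c0*e1 + c1*e0)"
        "pint (fst (snd (snd (bmul a b (q0,q1,q2,q3) (p0,p1,p2,p3)))))"
        "pint (snd (snd (snd (bmul a b (q0,q1,q2,q3) (p0,p1,p2,p3)))))"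
proof -
  obtain c2 where c2: "red q2 c2" using q(3) pint_obtain by blast
  obtain c3 where c3: "red q3 c3" using q(4) pint_obtain by blast
  obtain e2 where e2: "red p2 e2" using p(3) pint_obtain by blast
  obtain e3 where e3: "red p3 e3" using p(4) pint_obtain by blast
  have ab13: "13 dvd a * b" using b13 by simp
  have r22: "red (q2*p2) (c2*e2)" "red (q3*p3) (c3*e3)" "red (q2*p3 + q3*p2) (c2*e3 + c3*e2)"
    by (intro red_add red_mult c2 c3 e2 e3)+
  have ra: "red (of_int a) a" by (rule red_int)
  have "red (q0*p0 + of_int a*(q1*p1) + of_int b*(q2*p2) + of_int (a*b)*(q3*p3)) (c0*e0 + a*(c1*e1) + 0 + 0)"
    by (intro red_add red_mult ra red_zero_mod[OF r22(1) b13] red_zero_mod[OF r22(2) ab13] q p)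
  then show "red (fst (bmul a b (q0,q1,q2,q3) (p0,p1,p2,p3))) (c0*e0 + a*(c1*e1))"
    by (simp add: bmul_def algebra_simps)
  have "red (q0*p1 + q1*p0 + of_int b*(q2*p3 + q3*p2)) (c0*e1 + c1*e0 + 0)"
    by (intro red_add red_mult red_zero_mod[OF r22(3) b13] q p)
  then show "red (fst (snd (bmul a b (q0,q1,q2,q3) (p0,p1,p2,p3)))) (c0*e1 + c1*e0)"
    by (simp add: bmul_def algebra_simps)
  have "red (q0*p2 + q2*p0 + of_int a*(q1*p3 + q3*p1)) (c0*e2 + c2*e0 + a*(c1*e3 + c3*e1))"
    by (intro red_add red_mult ra q p c2 c3 e2 e3)
  then show "pint (fst (snd (snd (bmul a b (q0,q1,q2,q3) (p0,p1,p2,p3)))))"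
    using red_pint by (simp add: bmul_def algebra_simps)
  have "red (q0*p3 + q3*p0 + q1*p2 + q2*p1) (c0*e3 + c3*e0 + c1*e2 + c2*e1)"
    by (intro red_add red_mult q p c2 c3 e2 e3)
  then show "pint (snd (snd (snd (bmul a b (q0,q1,q2,q3) (p0,p1,p2,p3)))))"
    using red_pint by (simp add: bmul_def algebra_simps)
qed

lemma qmul_red:
  assumes "red x0 c0" "red x1 c1" "red y0 e0" "red y1 e1"
  shows "red (fst (qmul a (x0,x1) (y0,y1))) (c0*e0 + a*(c1*e1))"
        "red (snd (qmul a (x0,x1) (y0,y1))) (c0*e1 + c1*e0)"
proof -
  have "red (x0*y0 + of_int a*(x1*y1)) (c0*e0 + a*(c1*e1))"
    by (intro red_add red_mult red_int assms)
  then show "red (fst (qmul a (x0,x1) (y0,y1))) (c0*e0 + a*(c1*e1))" by (simp add: qmul_def algebra_simps)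
  have "red (x0*y1 + x1*y0) (c0*e1 + c1*e0)" by (intro red_add red_mult assms)
  then show "red (snd (qmul a (x0,x1) (y0,y1))) (c0*e1 + c1*e0)" by (simp add: qmul_def)
qed

lemma cong13_psi:
  fixes r a c0 c1 e0 e1 :: int
  assumes "[r*r = a] (mod 13)"
  shows "[(c0*e0 + a*(c1*e1)) + (c0*e1 + c1*e0) * r = (c0 + c1*r) * (e0 + e1*r)] (mod 13)"
proof -
  have "(c0 + c1*r) * (e0 + e1*r) - ((c0*e0 + a*(c1*e1)) + (c0*e1 + c1*e0) * r) = c1*e1*(r*r - a)"
    by (simp add: algebra_simps)
  moreover have "13 dvd (r*r - a)" using assms by (simp add: cong_iff_dvd_diff)
  ultimately have "13 dvd (c0 + c1*r) * (e0 + e1*r) - ((c0*e0 + a*(c1*e1)) + (c0*e1 + c1*e0) * r)" by simp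
  then have "[(c0 + c1*r) * (e0 + e1*r) = (c0*e0 + a*(c1*e1)) + (c0*e1 + c1*e0) * r] (mod 13)"
    by (simp add: cong_iff_dvd_diff)
  then show ?thesis by (rule cong_sym)
qed

lemma cong_sq_helper:
  fixes P G W Pi :: int
  assumes "[W*W = P*P*G] (mod 13)" "[P*Pi = 1] (mod 13)"
  shows "[(W*Pi)*(W*Pi) = G] (mod 13)"
proof -
  have "(W*Pi)*(W*Pi) - G = Pi*Pi*(W*W - P*P*G) + G*(P*Pi - 1)*(P*Pi + 1)"
    by (simp add: algebra_simps)
  moreover have "13 dvd W*W - P*P*G" using assms(1) by (simp add: cong_iff_dvd_diff)
  moreover have "13 dvd P*Pi - 1" using assms(2) by (simp add: cong_iff_dvd_diff)
  ultimately show ?thesis unfolding cong_iff_dvd_diff by simp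
qed

lemma cong_sq_helper2:
  fixes P G W Pi :: int
  assumes "[- (W*W) = P*P*G] (mod 13)" "[P*Pi = 1] (mod 13)"
  shows "[(5*W*Pi)*(5*W*Pi) = G] (mod 13)"
proof -
  have eq: "(5*W*Pi)*(5*W*Pi) - G = Pi*Pi*(- (W*W) - P*P*G) + 26*W*W*Pi*Pi + G*(P*Pi - 1)*(P*Pi + 1)"
    by (simp add: algebra_simps)
  have h1: "13 dvd - (W*W) - P*P*G" using assms(1) by (simp add: cong_iff_dvd_diff)
  have h2: "13 dvd P*Pi - 1" using assms(2) by (simp add: cong_iff_dvd_diff)
  have d1: "13 dvd Pi*Pi*(- (W*W) - P*P*G)" by (rule dvd_mult[OF h1])
  have d2: "13 dvd 26*W*W*Pi*Pi" by simp
  have d3: "13 dvd G*(P*Pi - 1)*(P*Pi + 1)" by (rule dvd_mult2[OF dvd_mult[OF h2]])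
  have "13 dvd Pi*Pi*(- (W*W) - P*P*G) + 26*W*W*Pi*Pi + G*(P*Pi - 1)*(P*Pi + 1)"
    by (rule dvd_add[OF dvd_add[OF d1 d2] d3])
  then have "13 dvd (5*W*Pi)*(5*W*Pi) - G" by (simp only: eq)
  then show ?thesis by (simp only: cong_iff_dvd_diff)
qed



lemma no_odd_unit:
  assumes ab: "real_biquadratic a b" and b13: "13 dvd b" and a13: "\<not> 13 dvd a"
    and rr: "[r*r = a] (mod 13)"
    and eu: "ep \<in> quad_units a" "quad_norm a ep = -1" and eg: "red (fst ep) g0" "red (snd ep) g1"
    and ns: "\<forall>z. \<not> [z*z = g0 + g1*r] (mod 13)"
    and q: "q \<in> bq_units a b"
  shows "prod4 a b q > 0"
proof (rule ccontr)
  assume neg: "\<not> prod4 a b q > 0"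
  obtain q0 q1 q2 q3 where qq: "q = (q0,q1,q2,q3)" by (metis prod_cases4)
  have a: "a > 1" "squarefree a" and a0: "a \<ge> 0" "b \<ge> 0" using ab unfolding real_biquadratic_def by auto
  have u0: "bq_elt a b False False q \<noteq> 0" and ai: "algebraic_int (bq_elt a b False False q)"
    and aii: "algebraic_int (1 / bq_elt a b False False q)" using q unfolding bq_units_def by auto
  have pq: "pint q0" "pint q1" "pint q2" "pint q3" using bq_pint[OF ab b13 a13 ai[unfolded qq]] by auto
  obtain c0 where c0: "red q0 c0" using pq(1) pint_obtain by blast
  obtain c1 where c1: "red q1 c1" using pq(2) pint_obtain by blast
  define qf where "qf = flip False True q"
  have qf_eq: "qf = (q0, q1, -q2, -q3)" by (simp add: qf_def qq flip_def sg_def)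
  define al where "al = bmul a b q qf"
  have al_form: "al = (fst al, fst (snd al), 0, 0)"
    by (simp add: al_def qf_eq qq bmul_def algebra_simps)
  define alp where "alp = (fst al, fst (snd al))"
  have nz: "bq_elt a b s t q \<noteq> 0" for s t by (rule bq_nonzero[OF ab u0])
  have ais: "algebraic_int (bq_elt a b s t q)" for s t by (rule conj_alg_int[OF ab ai])
  obtain rinv where rinv: "\<And>s t. bq_elt a b s t rinv = 1 / bq_elt a b s t q" using bq_inverse[OF ab u0] by blast
  have aiis: "algebraic_int (1 / bq_elt a b s t q)" for s t
  proof -
    have "algebraic_int (bq_elt a b False False rinv)" using aii rinv by simp
    then have "algebraic_int (bq_elt a b s t rinv)" by (rule conj_alg_int[OF ab])
    then show ?thesis using rinv by simp
  qed
  have qfv: "bq_elt a b s t qf = bq_elt a b s (\<not> t) q" for s t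
    unfolding qf_def bq_flip_gen by (cases t) simp_all
  have alv: "bq_elt a b s t al = bq_elt a b s t q * bq_elt a b s (\<not> t) q" for s t
    unfolding al_def bq_mult[OF a0] qfv ..
  have e1: "quad_elt a alp = bq_elt a b False False q * bq_elt a b False True q"
  proof -
    have "quad_elt a alp = bq_elt a b False False al"
      unfolding alp_def quad_as_bq[of a _ _ b] by (subst (2) al_form) simp
    then show ?thesis using alv[of False False] by simp
  qed
  have e2: "quad_elt a (qcnj alp) = bq_elt a b True False q * bq_elt a b True True q"
  proof -
    have "quad_elt a (qcnj alp) = bq_elt a b True False al"
      unfolding alp_def quad_cnj_as_bq[of a _ _ b] by (subst (2) al_form) simp
    then show ?thesis using alv[of True False] by simp
  qed
  have alu: "alp \<in> quad_units a"
  proof -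
    have h1: "quad_elt a alp \<noteq> 0" using e1 nz by simp
    have h2: "algebraic_int (quad_elt a alp)" using e1 alg_int_add_mult(2)[OF ais ais] by simp
    have "1 / quad_elt a alp = (1 / bq_elt a b False False q) * (1 / bq_elt a b False True q)" using e1 by simp
    then have h3: "algebraic_int (1 / quad_elt a alp)" using alg_int_add_mult(2)[OF aiis aiis] by simp
    show ?thesis unfolding quad_units_def using h1 h2 h3 by simp
  qed
  have Nr: "of_rat (quad_norm a alp) = prod4 a b q"
    using quad_norm_real[of a alp] a0 e1 e2 unfolding prod4_def by (simp add: mult_ac)
  have "prod4 a b q \<noteq> 0" unfolding prod4_def using nz by simp
  then have "prod4 a b q < 0" using neg by simp
  then have "quad_norm a alp < 0" using Nr by (metis of_rat_less_0_iff)
  then have Nm: "quad_norm a alp = -1" using quad_unit_props(3)[OF a(2) a(1) alu] by auto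
  obtain w where wu: "w \<in> quad_units a" and weq: "qmul a alp ep = qmul a w w \<or> qmul a alp ep = qneg (qmul a w w)"
    using norm_m1_prod_square[OF a(2) a(1) alu Nm eu] by blast
  have al_eq: "al = bmul a b (q0,q1,q2,q3) (q0,q1,-q2,-q3)" unfolding al_def qq qf_eq[unfolded qq] ..
  have ra0: "red (fst alp) (c0*c0 + a*(c1*c1))"
    unfolding alp_def al_eq by (simp add: bmul_red(1)[OF b13 c0 c1 pq(3,4) c0 c1 pint_neg[OF pq(3)] pint_neg[OF pq(4)]])
  have ra1: "red (snd alp) (c0*c1 + c1*c0)"
    using bmul_red(2)[OF b13 c0 c1 pq(3,4) c0 c1 pint_neg[OF pq(3)] pint_neg[OF pq(4)], of a] unfolding alp_def al_eq by simp
  obtain w0 w1 where ww: "w = (w0, w1)" by (cases w)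
  have pw: "pint w0" "pint w1" using quad_unit_props(1,2)[OF a(2) a(1) wu] half_int_pint ww by auto
  obtain h0 where h0: "red w0 h0" using pw(1) pint_obtain by blast
  obtain h1 where h1: "red w1 h1" using pw(2) pint_obtain by blast
  define wi where "wi = qinv a w"
  have wiu: "wi \<in> quad_units a" unfolding wi_def by (rule units_inv[OF a(2) a(1) wu])
  obtain v0 v1 where vv: "wi = (v0, v1)" by (cases wi)
  have pv: "pint v0" "pint v1" using quad_unit_props(1,2)[OF a(2) a(1) wiu] half_int_pint vv by auto
  obtain k0 where k0: "red v0 k0" using pv(1) pint_obtain by blast
  obtain k1 where k1: "red v1 k1" using pv(2) pint_obtain by blast
  have w0ne: "quad_elt a w \<noteq> 0" using wu unfolding quad_units_def by auto
  have "quad_elt a (qmul a w wi) = quad_elt a (1,0)"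
    unfolding wi_def quad_mult[OF a0(1)] quad_inv[OF a(2) a(1) w0ne] using w0ne by (simp add: quad_one)
  then have wwi: "qmul a w wi = (1,0)" by (rule quad_inj[OF a(2) a(1)])
  define W where "W = h0 + h1*r"
  define Kk where "Kk = k0 + k1*r"
  have "[h0*k0 + a*(h1*k1) = 1] (mod 13)"
    using red_unique[OF qmul_red(1)[OF h0 h1 k0 k1, of a]] wwi red_int[of 1] unfolding ww vv by auto
  moreover have "[h0*k1 + h1*k0 = 0] (mod 13)"
    using red_unique[OF qmul_red(2)[OF h0 h1 k0 k1, of a]] wwi red_int[of 0] unfolding ww vv by auto
  ultimately have "[(h0*k0 + a*(h1*k1)) + (h0*k1 + h1*k0) * r = 1 + 0 * r] (mod 13)"
    by (intro cong_add cong_mult cong_refl)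
  then have WK: "[W * Kk = 1] (mod 13)" unfolding W_def Kk_def
    using cong13_psi[OF rr, of h0 k0 h1 k1] by (metis cong_sym cong_trans add_0_right mult_zero_left)
  define P where "P = c0 + c1*r"
  define G where "G = g0 + g1*r"
  obtain e0 e1' where ee: "ep = (e0, e1')" by (cases ep)
  have ge: "red e0 g0" "red e1' g1" using eg ee by auto
  obtain x0 x1 where alpxy: "alp = (x0, x1)" by (cases alp)
  have rx: "red x0 (c0*c0 + a*(c1*c1))" "red x1 (c0*c1 + c1*c0)" using ra0 ra1 alpxy by auto
  have PP: "[(c0*c0 + a*(c1*c1)) + (c0*c1 + c1*c0) * r = P * P] (mod 13)"
    unfolding P_def by (rule cong13_psi[OF rr])
  define A0 where "A0 = (c0*c0 + a*(c1*c1))*g0 + a*((c0*c1 + c1*c0)*g1)"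
  define A1 where "A1 = (c0*c0 + a*(c1*c1))*g1 + (c0*c1 + c1*c0)*g0"
  have rA: "red (fst (qmul a alp ep)) A0" "red (snd (qmul a alp ep)) A1"
    unfolding alpxy ee A0_def A1_def by (rule qmul_red[OF rx ge])+
  have AP: "[A0 + A1 * r = P * P * G] (mod 13)"
  proof -
    have "[A0 + A1 * r = ((c0*c0 + a*(c1*c1)) + (c0*c1 + c1*c0) * r) * G] (mod 13)"
      unfolding A0_def A1_def G_def by (rule cong13_psi[OF rr])
    also have "[((c0*c0 + a*(c1*c1)) + (c0*c1 + c1*c0) * r) * G = P * P * G] (mod 13)"
      by (intro cong_mult PP cong_refl)
    finally show ?thesis .
  qed
  define B0 where "B0 = h0*h0 + a*(h1*h1)"
  define B1 where "B1 = h0*h1 + h1*h0"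
  have rB: "red (fst (qmul a w w)) B0" "red (snd (qmul a w w)) B1"
    unfolding ww B0_def B1_def by (rule qmul_red[OF h0 h1 h0 h1])+
  have BW: "[B0 + B1 * r = W * W] (mod 13)" unfolding B0_def B1_def W_def by (rule cong13_psi[OF rr])
  have W13: "\<not> 13 dvd W"
  proof
    assume "13 dvd W"
    then have "[W * Kk = 0] (mod 13)" by (simp add: cong_0_iff)
    then have "[1 = (0::int)] (mod 13)" using WK by (metis cong_sym cong_trans)
    then show False by (simp add: cong_iff_dvd_diff)
  qed
  have main: "[W * W = P * P * G] (mod 13) \<or> [- (W * W) = P * P * G] (mod 13)"
    using weq
  proof
    assume h: "qmul a alp ep = qmul a w w"
    have "[A0 = B0] (mod 13)" using red_unique[OF rA(1)] rB(1) h by simp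
    moreover have "[A1 = B1] (mod 13)" using red_unique[OF rA(2)] rB(2) h by simp
    ultimately have "[A0 + A1 * r = B0 + B1 * r] (mod 13)" by (intro cong_add cong_mult cong_refl)
    then have "[W * W = P * P * G] (mod 13)" using AP BW by (metis cong_sym cong_trans)
    then show ?thesis by blast
  next
    assume h: "qmul a alp ep = qneg (qmul a w w)"
    have "red (fst (qneg (qmul a w w))) (- B0)" using red_neg[OF rB(1)] by (simp add: qneg_def)
    then have "[A0 = - B0] (mod 13)" using red_unique[OF rA(1)] h by simp
    moreover have "red (snd (qneg (qmul a w w))) (- B1)" using red_neg[OF rB(2)] by (simp add: qneg_def)
    then have "[A1 = - B1] (mod 13)" using red_unique[OF rA(2)] h by simp
    ultimately have "[A0 + A1 * r = (- B0) + (- B1) * r] (mod 13)" by (intro cong_add cong_mult cong_refl)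
    moreover have "[(- B0) + (- B1) * r = - (W * W)] (mod 13)"
    proof -
      have "[- (B0 + B1 * r) = - (W * W)] (mod 13)" using BW by (rule cong_minus_minus_iff[THEN iffD2])
      then show ?thesis by simp
    qed
    ultimately have "[- (W * W) = P * P * G] (mod 13)" using AP by (metis cong_sym cong_trans)
    then show ?thesis by blast
  qed
  have P13: "\<not> 13 dvd P"
  proof
    assume "13 dvd P"
    then have pg: "13 dvd P * P * G" by simp
    have "13 dvd W * W"
      using main
    proof
      assume "[W * W = P * P * G] (mod 13)"
      then have "13 dvd W * W - P * P * G" by (simp add: cong_iff_dvd_diff)
      from dvd_add[OF this pg] show "13 dvd W * W" by simp
    next
      assume "[- (W * W) = P * P * G] (mod 13)"
      then have "13 dvd - (W * W) - P * P * G" by (simp add: cong_iff_dvd_diff)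
      from dvd_add[OF this pg] show "13 dvd W * W" by simp
    qed
    then have "13 dvd W" using prime_dvd_multD[OF prime13] by blast
    then show False using W13 by simp
  qed
  obtain Pi where Pi: "[P * Pi = 1] (mod 13)" using cong_solve_coprime_int[OF cop13[OF P13]] by blast
  have "\<exists>z. [z*z = G] (mod 13)"
    using main
  proof
    assume "[W * W = P * P * G] (mod 13)"
    from cong_sq_helper[OF this Pi] show ?thesis by blast
  next
    assume "[- (W * W) = P * P * G] (mod 13)"
    from cong_sq_helper2[OF this Pi] show ?thesis by blast
  qed
  then show False using ns unfolding G_def by blast
qed



definition v1 :: "bit ^ (bool \<times> bool)" where "v1 = (\<chi> i. 1)"
definition va :: "bit ^ (bool \<times> bool)" where "va = (\<chi> i. if fst i then 1 else 0)"
definition vb :: "bit ^ (bool \<times> bool)" where "vb = (\<chi> i. if snd i then 1 else 0)"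

lemma bit_cases2: "(x::bit) = 0 \<or> x = 1"
  by (cases x) auto

lemma UNIV_bb: "(UNIV :: (bool \<times> bool) set) = {(False,False),(False,True),(True,False),(True,True)}"
  by auto

lemma even_in_span:
  assumes "v $ (False,False) + v $ (False,True) + v $ (True,False) + v $ (True,True) = (0::bit)"
  shows "v \<in> vec.span {v1, va, vb}"
proof -
  have eq: "v = (v $ (False,False)) *s v1 + (v $ (True,False) + v $ (False,False)) *s va
                + (v $ (False,True) + v $ (False,False)) *s vb"
  proof (rule Finite_Cartesian_Product.vec_eq_iff[THEN iffD2], intro allI)
    fix i :: "bool \<times> bool"
    obtain s t where i: "i = (s,t)" by (cases i)
    have xx: "\<And>x::bit. x + x = 0" using bit_cases2 by auto
    define S3 where "S3 = v $ (False,False) + v $ (False,True) + v $ (True,False)"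
    have a3: "S3 + v $ (True,True) = 0" using assms unfolding S3_def .
    have "v $ (True,True) = (S3 + S3) + v $ (True,True)" by (simp only: xx add_0_left)
    also have "\<dots> = S3 + (S3 + v $ (True,True))" by (simp only: add.assoc)
    also have "\<dots> = S3" by (simp only: a3 add_0_right)
    finally have e: "v $ (True,True) = v $ (False,False) + v $ (False,True) + v $ (True,False)" unfolding S3_def .
    show "v $ i = ((v $ (False,False)) *s v1 + (v $ (True,False) + v $ (False,False)) *s va
                + (v $ (False,True) + v $ (False,False)) *s vb) $ i"
      unfolding i v1_def va_def vb_def
      using bit_cases2[of "v $ (False,False)"] bit_cases2[of "v $ (False,True)"] bit_cases2[of "v $ (True,False)"]
      by (cases s; cases t) (auto simp: e vector_add_component vector_smult_component)
  qed
  show ?thesis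
    by (subst eq) (intro vec.span_add vec.span_scale vec.span_base; simp)
qed

lemma dim3:
  fixes S :: "(bit ^ (bool \<times> bool)) set"
  assumes "v1 \<in> S" "va \<in> S" "vb \<in> S"
      and ev: "\<forall>v\<in>S. v $ (False,False) + v $ (False,True) + v $ (True,False) + v $ (True,True) = 0"
  shows "vec.dim S = 3"
proof -
  have c: "v1 $ (False,False) = 1" "va $ (False,False) = 0" "vb $ (False,False) = 0"
          "va $ (True,False) = 1" "vb $ (True,False) = 0"
    unfolding v1_def va_def vb_def by simp_all
  have d: "v1 \<noteq> va" "v1 \<noteq> vb" "va \<noteq> vb" using c by auto
  have "vec.dim S \<le> card {v1, va, vb}"
    by (rule vec.dim_le_card) (use ev even_in_span in auto)
  also have "card {v1, va, vb} = 3" using d by simp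
  finally have le: "vec.dim S \<le> 3" .
  have ind: "vec.independent {v1, va, vb}"
  proof -
    have "va \<noteq> 0" using c(4) by auto
    then have i1: "vec.independent {va}" by simp
    have "vb \<notin> vec.span {va}"
    proof
      assume "vb \<in> vec.span {va}"
      then obtain k where "vb = k *s va" unfolding vec.span_singleton by auto
      then have "vb $ (False,True) = (k *s va) $ (False,True)" by simp
      then show False unfolding vb_def va_def by simp
    qed
    then have i2: "vec.independent {vb, va}" by (rule vec.independent_insertI[OF _ i1])
    have "v1 \<notin> vec.span {vb, va}"
    proof
      assume "v1 \<in> vec.span {vb, va}"
      then obtain k where "v1 - k *s vb \<in> vec.span {va}" unfolding vec.span_insert by auto
      then obtain k' where "v1 - k *s vb = k' *s va" unfolding vec.span_singleton by auto
      then have "(v1 - k *s vb) $ (False,False) = (k' *s va) $ (False,False)" by simp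
      then show False unfolding v1_def vb_def va_def by simp
    qed
    then have "vec.independent {v1, vb, va}" by (rule vec.independent_insertI[OF _ i2])
    then show ?thesis by (simp add: insert_commute)
  qed
  have "card {v1, va, vb} \<le> vec.dim S"
    by (rule vec.independent_card_le_dim[OF _ ind]) (use assms in auto)
  then show ?thesis using le d by simp
qed

lemma even_sig:
  fixes x1 x2 x3 x4 :: real
  assumes "x1 * x2 * x3 * x4 > 0"
  shows "(if x1 < 0 then 1 else 0) + (if x2 < 0 then 1 else 0) + (if x3 < 0 then 1 else 0) + (if x4 < 0 then (1::bit) else 0) = 0"
proof -
  have nz: "x1 \<noteq> 0" "x2 \<noteq> 0" "x3 \<noteq> 0" "x4 \<noteq> 0" using assms by auto
  have "(x1 * x2) * (x3 * x4) > 0" using assms by (simp add: mult.assoc)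
  then show ?thesis using nz
    by (auto simp: zero_less_mult_iff mult_less_0_iff linorder_neq_iff)
qed



lemma sqrt_in_K:
  assumes ab: "real_biquadratic a b" and d: "d > 1" "squarefree d"
      and h: "sqrt (of_int d) \<in> biquad_field a b"
  shows "d = a \<or> d = b \<or> (\<exists>z. z \<noteq> 0 \<and> sqrt (of_int d) = of_rat z * sqrt (of_int a) * sqrt (of_int b)
                                  \<and> of_int d = z^2 * of_int a * of_int b)"
proof -
  have a: "a > 1" "squarefree a" and b: "b > 1" "squarefree b" and a0: "a \<ge> 0" "b \<ge> 0"
    using ab unfolding real_biquadratic_def by auto
  obtain q where sq: "sqrt (of_int d) = bq_elt a b False False q" using h unfolding biquad_field_def by blast
  obtain q0 q1 q2 q3 where qq: "q = (q0,q1,q2,q3)" by (metis prod_cases4)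
  have "bq_elt a b False False (bmul a b q q) = bq_elt a b False False (of_int d,0,0,0)"
    unfolding bq_mult[OF a0] sq[symmetric] bq_const using d by simp
  then have "bmul a b q q = (of_int d,0,0,0)" by (rule bq_inj_eq[OF ab])
  then have E0: "q0*q0 + of_int a*q1*q1 + of_int b*q2*q2 + of_int a * of_int b*q3*q3 = of_int d"
    and E1: "q0*q1 + of_int b * (q2*q3) = 0" and E2: "q0*q2 + of_int a * (q1*q3) = 0"
    and E3: "q0*q3 + q1*q2 = 0"
    unfolding qq bmul_def by (auto simp: algebra_simps)
  have an: "(of_int a :: rat) \<noteq> 0" "(of_int b :: rat) \<noteq> 0" using a b by auto
  show ?thesis
  proof (cases "q0 = 0")
    case False
    have "q1 * (q0*q0 - of_int b * q2*q2) = 0"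
    proof -
      have "q1 * (q0*q0 - of_int b * q2*q2) = q0 * (q0*q1 + of_int b * (q2*q3)) - of_int b * q2 * (q0*q3 + q1*q2)"
        by (simp add: algebra_simps)
      then show ?thesis using E1 E3 by simp
    qed
    moreover have "q1 \<noteq> 0 \<Longrightarrow> q0*q0 \<noteq> of_int b * q2*q2"
    proof
      assume "q0*q0 = of_int b * q2*q2"
      moreover have "q2 \<noteq> 0" using False calculation by auto
      ultimately have "(q0/q2)^2 = of_int b" by (simp add: field_simps power2_eq_square)
      then show False using sqfree_not_square_rat[OF b(2) b(1)] by blast
    qed
    ultimately have q1: "q1 = 0" by auto
    have q3: "q3 = 0" using E3 q1 False by simp
    have q2: "q2 = 0" using E2 q3 False by simp
    have "sqrt (of_int d) = of_rat q0" using sq unfolding qq q1 q2 q3 by (simp add: bq_const)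
    then show ?thesis using sqrt_not_rat[OF d(2) d(1)] by blast
  next
    case True
    have p12: "q1 * q2 = 0" using E3 True by simp
    have p23: "q2 * q3 = 0" using E1 True an by simp
    have p13: "q1 * q3 = 0" using E2 True an by simp
    show ?thesis
    proof (cases "q1 = 0")
      case False
      then have "q2 = 0" "q3 = 0" using p12 p13 by auto
      then have "of_int a * q1^2 = of_int d" using E0 True by (simp add: power2_eq_square)
      then have "a = d" using sqfree_eq_rat[OF a(2) d(2)] a d by simp
      then show ?thesis by simp
    next
      case q1: True
      show ?thesis
      proof (cases "q2 = 0")
        case False
        then have "q3 = 0" using p23 by auto
        then have "of_int b * q2^2 = of_int d" using E0 True q1 by (simp add: power2_eq_square)
        then have "b = d" using sqfree_eq_rat[OF b(2) d(2)] b d by simp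
        then show ?thesis by simp
      next
        case q2: True
        have e: "of_int d = q3^2 * of_int a * of_int b" using E0 True q1 q2 by (simp add: power2_eq_square algebra_simps)
        then have "q3 \<noteq> 0" using d by auto
        moreover have "sqrt (of_int d) = of_rat q3 * sqrt (of_int a) * sqrt (of_int b)"
          using sq unfolding qq True q1 q2 by (simp add: bq_elt_expand sg_def)
        ultimately show ?thesis using e by blast
      qed
    qed
  qed
qed

lemma third_bound:
  fixes d a b :: int and z :: rat
  assumes "squarefree d" "d > 0" "a > 0" "b > 0" "of_int d = z^2 * of_int a * of_int b"
  shows "d \<le> a * b"
proof -
  obtain n k where nk: "quotient_of z = (n, k)" by (cases "quotient_of z")
  have k: "k > 0" and cop: "coprime n k" and z: "z = of_int n / of_int k"
    using nk quotient_of_denom_pos quotient_of_coprime quotient_of_div by blast+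
  have "of_int (d * k^2) = (of_int (a * b * n^2) :: rat)"
    using assms(5) k unfolding z by (simp add: field_simps power2_eq_square)
  then have e: "d * k^2 = a * b * n^2" by (simp only: of_int_eq_iff)
  have "n^2 dvd d * k^2" using e by simp
  moreover have "coprime (n^2) (k^2)" using cop by simp
  ultimately have "n^2 dvd d" by (simp add: coprime_dvd_mult_left_iff)
  then have "n dvd 1" using assms(1) squarefreeD by blast
  then have "\<bar>n\<bar> = 1" by simp
  then have "n^2 = 1" by (metis power2_abs one_power2)
  then have e2: "d * k^2 = a * b" using e by simp
  have "k^2 \<ge> 1" using k by (simp add: one_le_power)
  then have "d * 1 \<le> d * k^2" using assms(2) by (intro mult_left_mono) auto
  then show ?thesis using e2 by simp
qed



lemma no_square_between:
  fixes m x :: int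
  assumes "m \<ge> 0" "m^2 < x^2" "x^2 < (m+1)^2"
  shows False
proof -
  have "\<not> \<bar>x\<bar> \<le> \<bar>m\<bar>" using assms(2) abs_le_square_iff[of x m] by simp
  then have "\<bar>x\<bar> > m" using assms(1) by simp
  moreover have "\<not> \<bar>m+1\<bar> \<le> \<bar>x\<bar>" using assms(3) abs_le_square_iff[of "m+1" x] by simp
  then have "\<bar>x\<bar> < m + 1" using assms(1) by simp
  ultimately show False by simp
qed

lemma sqdec:
  fixes n :: int
  assumes "n > 0"
  shows "n = squarefree_part n * (square_part n)^2" "squarefree (squarefree_part n)"
        "square_part n > 0" "squarefree_part n > 0"
proof -
  show e: "n = squarefree_part n * (square_part n)^2" by (rule squarefree_decompose)
  show "squarefree (squarefree_part n)" by simp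
  have "square_part n \<noteq> 0" using assms square_part_0_iff[of n] by auto
  moreover have "\<bar>square_part n\<bar> = square_part n" using normalize_square_part[of n] by simp
  then have "square_part n \<ge> 0" by (metis abs_ge_zero)
  ultimately show sp: "square_part n > 0" by linarith
  show "squarefree_part n > 0"
    using assms e sp by (metis zero_less_mult_pos2 zero_less_power)
qed

lemma unit_from_sqrt:
  fixes X :: int and s :: real
  assumes "s \<ge> 0" "s^2 = of_int X ^ 2 + 1"
  shows "of_int X + s \<noteq> 0" "algebraic_int (of_int X + s)" "algebraic_int (1 / (of_int X + s))"
proof -
  have ne: "of_int X + s \<noteq> 0"
  proof
    assume "of_int X + s = 0"
    then have "s = - of_int X" by simp
    then have "s^2 = of_int X ^ 2" by simp
    then show False using assms(2) by simp
  qed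
  show "of_int X + s \<noteq> 0" by (rule ne)
  have "poly (map_poly of_int [:-1, -2*X, 1:]) (of_int X + s) = 0"
    using assms(2) by (simp add: algebra_simps power2_eq_square)
  moreover have "lead_coeff [:-1, -2*X, 1:] = (1::int)" by simp
  ultimately show "algebraic_int (of_int X + s)" unfolding algebraic_int_altdef_ipoly by blast
  have inv: "1 / (of_int X + s) = s - of_int X"
  proof -
    have "(of_int X + s) * (s - of_int X) = 1" using assms(2) by (simp add: algebra_simps power2_eq_square)
    then show ?thesis using ne by (simp add: field_simps)
  qed
  have "poly (map_poly of_int [:-1, 2*X, 1:]) (s - of_int X) = 0"
    using assms(2) by (simp add: algebra_simps power2_eq_square)
  moreover have "lead_coeff [:-1, 2*X, 1:] = (1::int)" by simp
  ultimately show "algebraic_int (1 / (of_int X + s))" unfolding inv algebraic_int_altdef_ipoly by blast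
qed

lemma unit_pair:
  fixes X :: int
  assumes "quad_elt d (of_int X, y) = of_int X + s" "s \<ge> 0" "s^2 = of_int X ^ 2 + 1"
  shows "(of_int X, y) \<in> quad_units d"
  unfolding quad_units_def mem_Collect_eq assms(1) using unit_from_sqrt[OF assms(2,3)] by blast


lemma nonsq6: "\<not> [z*z = 6] (mod (13::int))"
proof
  assume h: "[z*z = 6] (mod 13)"
  define y where "y = z mod 13"
  have y: "0 \<le> y" "y < 13" unfolding y_def by auto
  have "[y*y = z*z] (mod 13)" unfolding y_def by (intro cong_mult) (simp_all add: cong_def)
  then have "[y*y = 6] (mod 13)" using h by (rule cong_trans)
  then have e: "(y*y) mod 13 = 6" by (simp add: cong_def)
  have "y = 0 \<or> y = 1 \<or> y = 2 \<or> y = 3 \<or> y = 4 \<or> y = 5 \<or> y = 6 \<or> y = 7 \<or> y = 8 \<or> y = 9 \<or> y = 10 \<or> y = 11 \<or> y = 12"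
    using y by presburger
  then show False using e by auto
qed

lemma sqrt_prod_sq:
  fixes f a :: int
  assumes "a \<ge> 0"
  shows "(of_int f * sqrt (of_int a))^2 = (of_int (a * f^2) :: real)"
  using assms by (simp add: power_mult_distrib)

lemma family_member:
  fixes j :: int
  assumes j: "j \<ge> 0"
  defines "m \<equiv> 169*j + 4"
  defines "A \<equiv> m^2 + 1" and "B \<equiv> (m+1)^2 + 1"
  defines "a \<equiv> squarefree_part A" and "b \<equiv> squarefree_part B"
  shows "real_biquadratic a b \<and>
         (\<forall>d::int. d > 1 \<and> squarefree d \<and> sqrt (of_int d) \<in> biquad_field a b \<longrightarrow>
             (\<exists>e. fundamental_unit d e \<and> quad_norm d e = -1)) \<and>
         unit_signature_rank a b = 3"
proof -
  define fa where "fa = square_part A"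
  define fb where "fb = square_part B"
  define C where "C = m^2 + m + 1"
  have m4: "m \<ge> 4" unfolding m_def using j by simp
  have Ap: "A > 0" "B > 0" unfolding A_def B_def by (simp_all add: add_pos_nonneg)
  note dA = sqdec[OF Ap(1), folded a_def fa_def]
  note dB = sqdec[OF Ap(2), folded b_def fb_def]
  have AB: "A * B = C^2 + 1" unfolding A_def B_def C_def by (simp add: algebra_simps power2_eq_square)
  have a1: "a > 1"
  proof (rule ccontr)
    assume "\<not> a > 1"
    then have "a = 1" using dA(4) by simp
    then have "A = fa^2" using dA(1) by simp
    then show False using no_square_between[of m fa] m4 unfolding A_def by (simp add: power2_eq_square algebra_simps)
  qed
  have b1: "b > 1"
  proof (rule ccontr)
    assume "\<not> b > 1"
    then have "b = 1" using dB(4) by simp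
    then have "B = fb^2" using dB(1) by simp
    then show False using no_square_between[of "m+1" fb] m4 unfolding B_def by (simp add: power2_eq_square algebra_simps)
  qed
  have ab_ne: "a \<noteq> b"
  proof
    assume "a = b"
    then have "A * B = (a * fa * fb)^2" using dA(1) dB(1) by (simp add: power2_eq_square algebra_simps)
    then have X: "(a*fa*fb)^2 = C^2 + 1" using AB by simp
    have C0: "C > 0" unfolding C_def using m4 by (simp add: add_pos_nonneg)
    have "C^2 < (a*fa*fb)^2" unfolding X by simp
    moreover have "(a*fa*fb)^2 < (C+1)^2" unfolding X using C0 by (simp add: power2_eq_square algebra_simps)
    ultimately show False using no_square_between[of C "a*fa*fb"] C0 by simp
  qed
  have rb: "real_biquadratic a b" unfolding real_biquadratic_def using a1 b1 dA(2) dB(2) ab_ne by simp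
  have a0: "a \<ge> 0" "b \<ge> 0" using a1 b1 by auto
  define sa where "sa = of_int fa * sqrt (of_int a :: real)"
  define sb where "sb = of_int fb * sqrt (of_int b :: real)"
  have eA: "a * fa^2 = m^2 + 1" using dA(1) unfolding A_def by simp
  have "(of_int (a * fa^2) :: real) = of_int (m^2 + 1)" by (simp only: eA)
  then have eA': "(of_int (a * fa^2) :: real) = of_int m ^ 2 + 1" by simp
  have eB: "b * fb^2 = (m+1)^2 + 1" using dB(1) unfolding B_def by simp
  have "(of_int (b * fb^2) :: real) = of_int ((m+1)^2 + 1)" by (simp only: eB)
  then have eB': "(of_int (b * fb^2) :: real) = of_int (m+1) ^ 2 + 1" by simp
  have sa: "sa \<ge> 0" "sa^2 = of_int m ^ 2 + 1"
    unfolding sa_def using dA(3) a0 sqrt_prod_sq[of a fa] eA' by auto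
  have sb: "sb \<ge> 0" "sb^2 = of_int (m+1) ^ 2 + 1"
    unfolding sb_def using dB(3) a0 sqrt_prod_sq[of b fb] eB' by auto
  have sab: "sa * sb \<ge> 0" "(sa * sb)^2 = of_int C ^ 2 + 1"
  proof -
    show "sa * sb \<ge> 0" using sa sb by simp
    have "(sa * sb)^2 = (of_int m ^ 2 + 1) * (of_int (m+1) ^ 2 + 1)" using sa sb by (simp add: power_mult_distrib)
    also have "\<dots> = of_int (A * B)" unfolding A_def B_def by simp
    finally show "(sa * sb)^2 = of_int C ^ 2 + 1" unfolding AB by simp
  qed
  have ua: "(of_int m, of_int fa) \<in> quad_units a" "quad_norm a (of_int m, of_int fa) = -1"
  proof -
    show "(of_int m, of_int fa) \<in> quad_units a"
      by (rule unit_pair[OF _ sa]) (simp add: quad_elt_def sa_def)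
    have "of_int m ^ 2 - of_int a * (of_int fa)^2 = (of_int (m^2 - A) :: rat)" using dA(1) by simp
    then show "quad_norm a (of_int m, of_int fa) = -1" unfolding quad_norm_def A_def by simp
  qed
  have ub: "(of_int (m+1), of_int fb) \<in> quad_units b" "quad_norm b (of_int (m+1), of_int fb) = -1"
  proof -
    show "(of_int (m+1), of_int fb) \<in> quad_units b"
      by (rule unit_pair[OF _ sb]) (simp add: quad_elt_def sb_def of_rat_add)
    have "of_int (m+1) ^ 2 - of_int b * (of_int fb)^2 = (of_int ((m+1)^2 - B) :: rat)" using dB(1) by simp
    then show "quad_norm b (of_int (m+1), of_int fb) = -1" unfolding quad_norm_def B_def by simp
  qed
  have fund: "\<forall>d::int. d > 1 \<and> squarefree d \<and> sqrt (of_int d) \<in> biquad_field a b \<longrightarrow>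
             (\<exists>e. fundamental_unit d e \<and> quad_norm d e = -1)"
  proof (intro allI impI, elim conjE)
    fix d :: int assume d1: "d > 1" and ds: "squarefree d" and dK: "sqrt (of_int d) \<in> biquad_field a b"
    consider "d = a" | "d = b" | z where "z \<noteq> 0" "sqrt (of_int d) = of_rat z * sqrt (of_int a) * sqrt (of_int b)"
        "of_int d = z^2 * of_int a * of_int b"
      using sqrt_in_K[OF rb d1 ds dK] by blast
    then show "\<exists>e. fundamental_unit d e \<and> quad_norm d e = -1"
    proof cases
      case 1 then show ?thesis using fund_unit_exists[OF ds d1] ua by simp
    next
      case 2 then show ?thesis using fund_unit_exists[OF ds d1] ub by simp
    next
      case 3
      define y where "y = of_int (fa * fb) / z"
      have qe: "quad_elt d (of_int C, y) = of_int C + sa * sb"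
        unfolding quad_elt_def y_def sa_def sb_def using 3(1,2) by (simp add: of_rat_divide of_rat_mult)
      have u: "(of_int C, y) \<in> quad_units d" by (rule unit_pair[OF qe sab])
      have "quad_norm d (of_int C, y) = of_int C ^ 2 - (z^2 * of_int a * of_int b) * (of_int (fa*fb) / z)^2"
        unfolding quad_norm_def y_def using 3(3) by simp
      also have "\<dots> = of_int C ^ 2 - of_int a * of_int b * (of_int (fa*fb))^2"
        using 3(1) by (simp add: power_divide field_simps)
      also have "\<dots> = of_int (C^2 - A * B)"
        using dA(1) dB(1) by (simp add: power2_eq_square algebra_simps)
      also have "\<dots> = -1" using AB by simp
      finally show ?thesis using fund_unit_exists[OF ds d1 u] by simp
    qed
  qed
  have A13: "A = 13 * (2197*j^2 + 104*j + 1) + 4" unfolding A_def m_def by (simp add: power2_eq_square algebra_simps)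
  have B13: "B = 169 * (169*j^2 + 10*j) + 26" unfolding B_def m_def by (simp add: power2_eq_square algebra_simps)
  have nA: "\<not> 13 dvd A"
  proof
    assume "13 dvd A"
    then have "13 dvd A - 13 * (2197*j^2 + 104*j + 1)" by simp
    then show False unfolding A13 by simp
  qed
  have a13: "\<not> 13 dvd a" using nA dA(1) by (metis dvd_mult2)
  have fa13: "\<not> 13 dvd fa" using nA dA(1) by (metis dvd_mult dvd_power zero_less_numeral dvd_trans pos2)
  have b13: "13 dvd b"
  proof (rule ccontr)
    assume nb: "\<not> 13 dvd b"
    have "13 dvd B" unfolding B13 by simp
    then have "13 dvd b * fb^2" using dB(1) by simp
    then have "13 dvd fb^2" using nb prime_dvd_multD[OF prime13] by blast
    then have "13 dvd fb" by (rule prime_dvd_power[OF prime13])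
    then have "169 dvd fb^2" by (auto simp: power2_eq_square)
    then have "169 dvd B" using dB(1) by simp
    then have "169 dvd B - 169 * (169*j^2 + 10*j)" by simp
    then show False unfolding B13 by simp
  qed
  obtain t where t: "[fa * t = 1] (mod 13)" using cong_solve_coprime_int[OF cop13[OF fa13]] by blast
  define r where "r = 2 * t"
  have Am: "[A = 4] (mod 13)" unfolding A13 by (simp add: cong_iff_dvd_diff)
  have rr: "[r*r = a] (mod 13)"
  proof -
    have "[a * fa * fa = 4] (mod 13)" using Am dA(1) by (simp add: power2_eq_square mult.assoc)
    then have "[(a * fa * fa) * (t * t) = 4 * (t * t)] (mod 13)" by (intro cong_mult cong_refl)
    moreover have "[(a * fa * fa) * (t * t) = a] (mod 13)"
    proof -
      have "[a * ((fa * t) * (fa * t)) = a * (1 * 1)] (mod 13)" using t by (intro cong_mult cong_refl)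
      then show ?thesis by (simp add: algebra_simps)
    qed
    ultimately have "[a = 4 * (t * t)] (mod 13)" by (metis cong_sym cong_trans)
    then show ?thesis unfolding r_def by (simp add: algebra_simps cong_sym_eq)
  qed
  have G6: "[m + fa * r = 6] (mod 13)"
  proof -
    have "[m + 2 * (fa * t) = 4 + 2 * 1] (mod 13)" using t unfolding m_def
      by (intro cong_add cong_mult cong_refl) (simp add: cong_iff_dvd_diff)
    then show ?thesis unfolding r_def by (simp add: algebra_simps)
  qed
  have ns: "\<forall>z. \<not> [z*z = m + fa*r] (mod 13)"
  proof (intro allI notI)
    fix z assume "[z*z = m + fa*r] (mod 13)"
    then have "[z*z = 6] (mod 13)" using G6 by (rule cong_trans)
    then show False using nonsq6 by blast
  qed
  have egm: "red (fst (of_int m :: rat, of_int fa :: rat)) m" "red (snd (of_int m :: rat, of_int fa :: rat)) fa"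
    using red_int by auto
  have pos: "\<forall>q\<in>bq_units a b. prod4 a b q > 0"
    using no_odd_unit[OF rb b13 a13 rr ua egm ns] by blast
  define S where "S = bq_signature a b ` bq_units a b"
  have sgn_a: "bq_elt a b s t (of_int m, of_int fa, 0, 0) = of_int m + (if s then -1 else 1) * sa" for s t
    unfolding sa_def by (simp add: bq_elt_expand sg_def of_rat_minus)
  have sgn_b: "bq_elt a b s t (of_int (m+1), 0, of_int fb, 0) = of_int (m+1) + (if t then -1 else 1) * sb" for s t
    unfolding sb_def by (simp add: bq_elt_expand sg_def of_rat_minus of_rat_add)
  have sa_gt: "sa > of_int m"
  proof -
    have "(of_int m)^2 < sa^2" using sa by simp
    then show ?thesis using sa(1) m4 by (smt (verit) power_mono)
  qed
  have sb_gt: "sb > of_int (m+1)"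
  proof -
    have "(of_int (m+1))^2 < sb^2" using sb by simp
    then show ?thesis using sb(1) m4 by (smt (verit) power_mono)
  qed
  have qa: "(of_int m, of_int fa, 0, 0) \<in> bq_units a b"
    unfolding bq_units_def mem_Collect_eq sgn_a using unit_from_sqrt[OF sa] by simp
  have qb: "(of_int (m+1), 0, of_int fb, 0) \<in> bq_units a b"
    unfolding bq_units_def mem_Collect_eq sgn_b using unit_from_sqrt[OF sb] by simp
  have qm: "(-1, 0, 0, 0) \<in> bq_units a b"
  proof -
    have "algebraic_int (-1 :: real)" by (intro algebraic_int_minus int_imp_algebraic_int) auto
    then show ?thesis unfolding bq_units_def mem_Collect_eq by (simp add: bq_const)
  qed
  have "bq_signature a b (of_int m, of_int fa, 0, 0) = va"
    unfolding bq_signature_def va_def sgn_a using sa_gt m4 sa(1)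
    by (intro Finite_Cartesian_Product.vec_eq_iff[THEN iffD2] allI) auto
  then have Sa: "va \<in> S" unfolding S_def using qa by (metis image_eqI)
  have "bq_signature a b (of_int (m+1), 0, of_int fb, 0) = vb"
    unfolding bq_signature_def vb_def sgn_b using sb_gt m4 sb(1)
    by (intro Finite_Cartesian_Product.vec_eq_iff[THEN iffD2] allI) auto
  then have Sb: "vb \<in> S" unfolding S_def using qb by (metis image_eqI)
  have "bq_signature a b (-1, 0, 0, 0) = v1"
    unfolding bq_signature_def v1_def
    by (intro Finite_Cartesian_Product.vec_eq_iff[THEN iffD2] allI) (simp add: bq_const)
  then have S1: "v1 \<in> S" unfolding S_def using qm by (metis image_eqI)
  have ev: "\<forall>v\<in>S. v $ (False,False) + v $ (False,True) + v $ (True,False) + v $ (True,True) = 0"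
  proof
    fix v assume "v \<in> S"
    then obtain q where q: "q \<in> bq_units a b" "v = bq_signature a b q" unfolding S_def by blast
    have "prod4 a b q > 0" using pos q(1) by blast
    then show "v $ (False,False) + v $ (False,True) + v $ (True,False) + v $ (True,True) = 0"
      unfolding q(2) bq_signature_def prod4_def using even_sig by simp
  qed
  have "unit_signature_rank a b = vec.dim S" unfolding unit_signature_rank_def S_def ..
  also have "\<dots> = 3" by (rule dim3[OF S1 Sa Sb ev])
  finally show ?thesis using rb fund by blast
qed



lemma big_member:
  fixes N :: int
  shows "\<exists>j\<ge>0. squarefree_part ((169*j+4)^2+1) > N"
proof -
  define n where "n = nat (\<bar>N\<bar> + 13)"
  define M0 where "M0 = (fact n :: int)"
  have "\<bar>M0^2 + 1\<bar> \<noteq> 1"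
  proof -
    have M1: "M0 \<ge> 1" unfolding M0_def by simp
    then have "M0^2 \<ge> 1" by simp
    then show ?thesis using M1 by simp
  qed
  then obtain q where q: "prime q" "q dvd M0^2 + 1" using prime_factor_int by blast
  have q0: "q > 1" using q(1) prime_gt_1_int by blast
  have qbig: "q > \<bar>N\<bar> + 13"
  proof (rule ccontr)
    assume "\<not> q > \<bar>N\<bar> + 13"
    then have "nat q \<le> n" unfolding n_def by simp
    then have "nat q dvd fact n" using q0 by (intro dvd_fact) auto
    then have "int (nat q) dvd int (fact n)" by (simp only: of_nat_dvd_iff)
    then have "q dvd M0" unfolding M0_def using q0 by (simp add: of_nat_fact)
    then have "q dvd M0^2" by (simp add: power2_eq_square)
    then have "q dvd (M0^2 + 1) - M0^2" using q(2) by (intro dvd_diff)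
    then have "q dvd 1" by simp
    then show False using q0 by simp
  qed
  have q13: "\<not> q dvd 13"
  proof
    assume "q dvd 13"
    then have "q \<le> 13" by (simp add: zdvd_imp_le)
    then show False using qbig by simp
  qed
  have q2: "\<not> q dvd 2"
  proof
    assume "q dvd 2"
    then have "q \<le> 2" by (simp add: zdvd_imp_le)
    then show False using qbig by simp
  qed
  have "\<not> q dvd 169"
  proof
    assume "q dvd 169"
    then have "q dvd 13 * 13" by simp
    then show False using q13 prime_dvd_multD[OF q(1)] by blast
  qed
  then have cop: "coprime 169 q" using q(1) prime_imp_coprime[of q 169] by (simp add: coprime_commute)
  obtain i where i: "[169 * i = 1] (mod q)" using cong_solve_coprime_int[OF cop] by blast
  define j0 where "j0 = ((M0 - 4) * i) mod q"
  have j0: "j0 \<ge> 0" unfolding j0_def using q0 by simp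
  define m0 where "m0 = 169 * j0 + 4"
  have "[169 * j0 = 169 * ((M0 - 4) * i)] (mod q)" unfolding j0_def by (intro cong_mult cong_refl) (simp add: cong_def)
  also have "[169 * ((M0 - 4) * i) = (M0 - 4) * (169 * i)] (mod q)" by (simp add: algebra_simps)
  also have "[(M0 - 4) * (169 * i) = (M0 - 4) * 1] (mod q)" using i by (intro cong_mult cong_refl)
  finally have "[169 * j0 = M0 - 4] (mod q)" by simp
  then have "[m0 = M0] (mod q)" unfolding m0_def using cong_add[OF _ cong_refl[of 4]] by fastforce
  then have "[m0^2 + 1 = M0^2 + 1] (mod q)" by (intro cong_add cong_pow cong_refl)
  then have qd0: "q dvd m0^2 + 1" using q(2) by (simp add: cong_dvd_iff)
  have qm0: "\<not> q dvd m0"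
  proof
    assume "q dvd m0"
    then have "q dvd m0^2" by (simp add: power2_eq_square)
    then have "q dvd (m0^2 + 1) - m0^2" using qd0 by (intro dvd_diff)
    then show False using q0 by simp
  qed
  have "\<exists>j\<ge>0. q dvd (169*j+4)^2+1 \<and> \<not> q^2 dvd (169*j+4)^2+1"
  proof (cases "q^2 dvd m0^2 + 1")
    case False
    then show ?thesis using qd0 j0 unfolding m0_def by blast
  next
    case True
    define j1 where "j1 = j0 + q"
    have e: "(169*j1+4)^2+1 = (m0^2 + 1) + q * (338 * m0) + q^2 * 28561"
      unfolding j1_def m0_def by (simp add: power2_eq_square algebra_simps)
    have "q dvd (169*j1+4)^2+1" unfolding e using qd0 by (simp add: power2_eq_square)
    moreover have "\<not> q^2 dvd (169*j1+4)^2+1"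
    proof
      assume h: "q^2 dvd (169*j1+4)^2+1"
      have "q^2 dvd ((169*j1+4)^2+1) - (m0^2 + 1) - q^2 * 28561" using h True by (intro dvd_diff) simp_all
      then have "q * q dvd q * (338 * m0)" unfolding e by (simp add: power2_eq_square)
      then have "q dvd 338 * m0" using q0 by simp
      then have "q dvd 338 \<or> q dvd m0" using prime_dvd_multD[OF q(1)] by blast
      moreover have "\<not> q dvd 338"
      proof
        assume "q dvd 338"
        then have "q dvd 2 * (13 * 13)" by simp
        then show False using q2 q13 prime_dvd_multD[OF q(1)] by blast
      qed
      ultimately show False using qm0 by blast
    qed
    moreover have "j1 \<ge> 0" unfolding j1_def using j0 q0 by simp
    ultimately show ?thesis by blast
  qed
  then obtain j where j: "j \<ge> 0" "q dvd (169*j+4)^2+1" "\<not> q^2 dvd (169*j+4)^2+1" by blast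
  define A where "A = (169*j+4)^2+1"
  have Ap: "A > 0" unfolding A_def by (simp add: add_pos_nonneg)
  note dA = sqdec[OF Ap]
  have "q dvd squarefree_part A"
  proof (rule ccontr)
    assume nq: "\<not> q dvd squarefree_part A"
    have "q dvd squarefree_part A * (square_part A)^2" using j(2) dA(1) unfolding A_def by simp
    then have "q dvd (square_part A)^2" using nq prime_dvd_multD[OF q(1)] by blast
    then have "q dvd square_part A" by (rule prime_dvd_power[OF q(1)])
    then have "q^2 dvd (square_part A)^2" by (simp add: power2_eq_square mult_dvd_mono)
    then have "q^2 dvd A" using dA(1) by (metis dvd_mult)
    then show False using j(3) unfolding A_def by simp
  qed
  then have "q \<le> squarefree_part A" using dA(4) by (simp add: zdvd_imp_le)
  then have "squarefree_part A > N" using qbig by simp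
  then show ?thesis using j(1) unfolding A_def by blast
qed


lemma sqrt_a_in_K: "a \<ge> 0 \<Longrightarrow> sqrt (of_int a) \<in> biquad_field a b"
  unfolding biquad_field_def by (intro CollectI exI[of _ "(0,1,0,0)"]) (simp add: bq_elt_expand sg_def)

theorem corollary4p9:
  shows "infinite {K :: real set. \<exists>a b. real_biquadratic a b \<and> K = biquad_field a b \<and>
           (\<forall>d::int. d > 1 \<and> squarefree d \<and> sqrt (of_int d) \<in> K \<longrightarrow>
               (\<exists>e. fundamental_unit d e \<and> quad_norm d e = -1)) \<and>
           unit_signature_rank a b = 3}"
  (is "infinite ?F")
proof
  assume fin: "finite ?F"
  define wa where "wa = (\<lambda>K. fst (SOME p. real_biquadratic (fst p) (snd p) \<and> K = biquad_field (fst p) (snd p)))"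
  define wb where "wb = (\<lambda>K. snd (SOME p. real_biquadratic (fst p) (snd p) \<and> K = biquad_field (fst p) (snd p)))"
  have w: "real_biquadratic (wa K) (wb K) \<and> K = biquad_field (wa K) (wb K)" if "K \<in> ?F" for K
  proof -
    from that obtain a b where "real_biquadratic a b" "K = biquad_field a b" by blast
    then have "\<exists>p. real_biquadratic (fst p) (snd p) \<and> K = biquad_field (fst p) (snd p)"
      by (intro exI[of _ "(a,b)"]) simp
    then show ?thesis unfolding wa_def wb_def by (rule someI_ex)
  qed
  define N where "N = Max (insert 0 ((\<lambda>K. wa K * wb K) ` ?F))"
  have N: "wa K * wb K \<le> N" if "K \<in> ?F" for K
    unfolding N_def using fin that by (intro Max_ge) auto
  obtain j where j: "j \<ge> 0" "squarefree_part ((169*j+4)^2+1) > N" using big_member by blast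
  define a where "a = squarefree_part ((169*j+4)^2+1)"
  define b where "b = squarefree_part (((169*j+4)+1)^2+1)"
  have fm: "real_biquadratic a b \<and>
         (\<forall>d::int. d > 1 \<and> squarefree d \<and> sqrt (of_int d) \<in> biquad_field a b \<longrightarrow>
             (\<exists>e. fundamental_unit d e \<and> quad_norm d e = -1)) \<and>
         unit_signature_rank a b = 3"
    unfolding a_def b_def by (rule family_member[OF j(1)])
  define K where "K = biquad_field a b"
  have KF: "K \<in> ?F" unfolding K_def using fm by blast
  have rb: "real_biquadratic a b" using fm by blast
  have a1: "a > 1" "squarefree a" using rb unfolding real_biquadratic_def by auto
  have rb': "real_biquadratic (wa K) (wb K)" and Keq: "K = biquad_field (wa K) (wb K)" using w[OF KF] by auto
  have a'1: "wa K > 1" "wb K > 1" using rb' unfolding real_biquadratic_def by auto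
  have "sqrt (of_int a) \<in> K" unfolding K_def using sqrt_a_in_K[of a b] a1 by simp
  then have "sqrt (of_int a) \<in> biquad_field (wa K) (wb K)" using Keq by simp
  then have disj: "a = wa K \<or> a = wb K \<or> (\<exists>z. z \<noteq> 0 \<and> sqrt (of_int a) = of_rat z * sqrt (of_int (wa K)) * sqrt (of_int (wb K))
                                  \<and> of_int a = z^2 * of_int (wa K) * of_int (wb K))"
    by (rule sqrt_in_K[OF rb' a1(1) a1(2)])
  have "a \<le> wa K * wb K"
    using disj
  proof (elim disjE exE conjE)
    assume 1: "a = wa K"
    have "wa K * 1 \<le> wa K * wb K" using a'1 by (intro mult_left_mono) auto
    then show ?thesis using 1 by simp
  next
    assume 2: "a = wb K"
    have "1 * wb K \<le> wa K * wb K" using a'1 by (intro mult_right_mono) auto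
    then show ?thesis using 2 by simp
  next
    fix z :: rat assume "z \<noteq> 0" and e: "of_int a = z^2 * of_int (wa K) * of_int (wb K)"
    have p: "a > 0" "wa K > 0" "wb K > 0" using a1 a'1 by auto
    show ?thesis by (rule third_bound[OF a1(2) p e])
  qed
  then have "a \<le> N" using N[OF KF] by simp
  then show False using j(2) unfolding a_def by simp
qed


end
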